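(* Let $(\xi_k)_{k\in\mathbb{Z}}$ be a stationary reversible Markov chain, $f\in\mathbb{L}_0^2(\pi)$, $X_k=f(\xi_k)$, $S_k=\sum_{i=1}^kX_i$ ($S_0=0$), $\mathcal{F}_k=\sigma(\xi_i,i\le k)$, $\mathcal{G}_k=\sigma(\xi_i,i\ge k)$, $\mathbb{E}_k(\cdot)=\mathbb{E}(\cdot\mid\mathcal{F}_k)$. Fix $n\ge1$ and set $$\theta_k^n=\frac1n\sum_{i=0}^{n-1}\mathbb{E}_k(X_k+\dots+X_{k+i}),\quad D_k^n=\theta_k^n-\mathbb{E}_{k-1}(\theta_k^n),\quad \tilde D_k^n=\theta_k^n-\mathbb{E}(\theta_k^n\mid\mathcal{G}_{k+1}),$$ $M_k^n=\sum_{i=1}^kD_i^n$, $\tilde M_k^n=\sum_{i=0}^{k-1}\tilde D_i^n$ and $$\bar R_k^n=\frac1n\sum_{i=1}^k\big[\mathbb{E}_{i-1}(S_{n+i-1}-S_{i-1})+\mathbb{E}_i(S_{n+i}-S_i)\big].$$ Then $(D_k^n)_k$ is a martingale difference sequence with respect to $(\mathcal{F}_k)$, $(\tilde D_k^n)_k$ is a (reverse) martingale difference sequence with respect to the decreasing filtration $(\mathcal{G}_k)$ (i.e. $\tilde D^n_k$ is $\mathcal{G}_k$-measurable and $\mathbb{E}(\tilde D_k^n\mid\mathcal{G}_{k+1})=0$), and for every $k\ge1$, $$S_k=\tfrac12\big[(X_k-X_0)+M_k^n+\tilde M_k^n+\bar R_k^n\big]\quad\text{a.s.}$$ Moreover,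 for every $p\ge1$, $\|\max_{1\le i\le n}|\bar R_i^n|\|_p\le 2\|\mathbb{E}_0(S_n)\|_p$, and $\|M_n^n\|_p\le\|S_n\|_p+3\max_{1\le i\le n}\|\mathbb{E}_0(S_i)\|_p$.
   Context: $(\xi_n)_{n\in\mathbb{Z}}$ is a stationary Markov chain with values in a general measurable state space, marginal law $\pi$ and transition kernel $Q(x,A)=\mathbb{P}(\xi_1\in A\mid\xi_0=x)$; reversible means $Q=Q^*$ on $\mathbb{L}^2(\pi)$, equivalently $(\xi_0,\xi_1)$ and $(\xi_1,\xi_0)$ have the same law. $\mathbb{L}_0^2(\pi)$ is the set of measurable $f$ with $\int f^2d\pi<\infty$, $\int fd\pi=0$. For the $\mathbb{L}_p$ bounds, assume in addition $\int|f|^pd\pi<\infty$ (otherwise the right-hand sides may be infinite). *)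

theory Defs
  imports "HOL-Probability.Probability"
begin

definition past_alg :: "'a measure \<Rightarrow> 's measure \<Rightarrow> (int \<Rightarrow> 'a \<Rightarrow> 's) \<Rightarrow> int \<Rightarrow> 'a measure" where
  "past_alg M S \<xi> k = sigma (space M) {\<xi> i -` A \<inter> space M | i A. i \<le> k \<and> A \<in> sets S}"

definition future_alg :: "'a measure \<Rightarrow> 's measure \<Rightarrow> (int \<Rightarrow> 'a \<Rightarrow> 's) \<Rightarrow> int \<Rightarrow> 'a measure" where
  "future_alg M S \<xi> k = sigma (space M) {\<xi> i -` A \<inter> space M | i A. k \<le> i \<and> A \<in> sets S}"

definition stationary_reversible_markov ::
  "'a measure \<Rightarrow> 's measure \<Rightarrow> 's measure \<Rightarrow> ('s \<Rightarrow> 's measure) \<Rightarrow> (int \<Rightarrow> 'a \<Rightarrow> 's) \<Rightarrow> bool" where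
  "stationary_reversible_markov M S \<pi> Q \<xi> \<longleftrightarrow>
     prob_space M \<and>
     (\<forall>k. \<xi> k \<in> measurable M S) \<and>
     Q \<in> measurable S (prob_algebra S) \<and>
     (\<forall>k. distr M S (\<xi> k) = \<pi>) \<and>
     (\<forall>k. \<forall>A\<in>sets S. AE \<omega> in M.
        real_cond_exp M (past_alg M S \<xi> k) (indicator (\<xi> (k + 1) -` A \<inter> space M)) \<omega>
          = measure (Q (\<xi> k \<omega>)) A) \<and>
     distr M (S \<Otimes>\<^sub>M S) (\<lambda>\<omega>. (\<xi> 0 \<omega>, \<xi> 1 \<omega>)) = distr M (S \<Otimes>\<^sub>M S) (\<lambda>\<omega>. (\<xi> 1 \<omega>, \<xi> 0 \<omega>))"

definition Lp_norm :: "'a measure \<Rightarrow> real \<Rightarrow> ('a \<Rightarrow> real) \<Rightarrow> real" where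
  "Lp_norm M p g = (\<integral>\<omega>. \<bar>g \<omega>\<bar> powr p \<partial>M) powr (1 / p)"

end

theory Submission
  imports Defs
begin

lemma integral_bind_integrable:
  fixes \<phi> :: "'s \<Rightarrow> real"
  assumes K[measurable]: "K \<in> N \<rightarrow>\<^sub>M subprob_algebra S" and ne: "space N \<noteq> {}"
    and \<phi>[measurable]: "\<phi> \<in> borel_measurable S"
    and int: "integrable (N \<bind> K) \<phi>"
  shows "AE x in N. integrable (K x) \<phi>"
    "integrable N (\<lambda>x. \<integral>y. \<phi> y \<partial>K x)"
    "(\<integral>x. \<phi> x \<partial>(N \<bind> K)) = (\<integral>x. \<integral>y. \<phi> y \<partial>K x \<partial>N)"
proof -
  note nn_integral_measurable_subprob_algebra[measurable]
  have sb: "sets (N \<bind> K) = sets S" by (rule sets_bind[OF sets_kernel[OF K] ne])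
  have [measurable]: "\<phi> \<in> borel_measurable (N \<bind> K)" using sb by (simp cong: measurable_cong_sets)
  have fin: "(\<integral>\<^sup>+x. \<integral>\<^sup>+y. ennreal (norm (\<phi> y)) \<partial>K x \<partial>N) < \<infinity>"
    using int by (simp add: integrable_iff_bounded nn_integral_bind[OF _ K])
  have AEfin: "AE x in N. (\<integral>\<^sup>+y. ennreal (norm (\<phi> y)) \<partial>K x) \<noteq> \<infinity>"
    by (rule nn_integral_PInf_AE) (use fin in auto)
  have mK: "x \<in> space N \<Longrightarrow> \<phi> \<in> borel_measurable (K x)" for x
    using subprob_measurableD(3)[OF K] by simp
  show AEi: "AE x in N. integrable (K x) \<phi>"
    using AEfin AE_space
  proof eventually_elim
    case (elim x)
    then show ?case using mK[of x] by (intro integrableI_bounded) (auto simp: less_top)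
  qed
  have bnd: "ennreal (norm (\<integral>y. \<phi> y \<partial>K x)) \<le> (\<integral>\<^sup>+y. ennreal (norm (\<phi> y)) \<partial>K x)" for x
  proof (cases "integrable (K x) \<phi>")
    case True then show ?thesis by (rule integral_norm_bound_ennreal)
  next
    case False then show ?thesis by (simp add: not_integrable_integral_eq)
  qed
  show intN: "integrable N (\<lambda>x. \<integral>y. \<phi> y \<partial>K x)"
  proof (rule integrableI_bounded)
    show "(\<lambda>x. \<integral>y. \<phi> y \<partial>K x) \<in> borel_measurable N" by measurable
    have "(\<integral>\<^sup>+x. ennreal (norm (\<integral>y. \<phi> y \<partial>K x)) \<partial>N) \<le> (\<integral>\<^sup>+x. \<integral>\<^sup>+y. ennreal (norm (\<phi> y)) \<partial>K x \<partial>N)"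
      by (intro nn_integral_mono bnd)
    then show "(\<integral>\<^sup>+x. ennreal (norm (\<integral>y. \<phi> y \<partial>K x)) \<partial>N) < \<infinity>" using fin by (simp add: le_less_trans)
  qed
  define gp where "gp x = (\<integral>\<^sup>+y. ennreal (\<phi> y) \<partial>K x)" for x
  define gm where "gm x = (\<integral>\<^sup>+y. ennreal (- \<phi> y) \<partial>K x)" for x
  have [measurable]: "gp \<in> borel_measurable N" "gm \<in> borel_measurable N" unfolding gp_def gm_def by measurable
  have gp_le: "gp x \<le> (\<integral>\<^sup>+y. ennreal (norm (\<phi> y)) \<partial>K x)" for x
    unfolding gp_def by (intro nn_integral_mono) auto
  have gm_le: "gm x \<le> (\<integral>\<^sup>+y. ennreal (norm (\<phi> y)) \<partial>K x)" for x
    unfolding gm_def by (intro nn_integral_mono) auto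
  have gp_fin: "(\<integral>\<^sup>+x. gp x \<partial>N) < \<infinity>"
    using fin by (rule le_less_trans[rotated]) (intro nn_integral_mono gp_le)
  have gm_fin: "(\<integral>\<^sup>+x. gm x \<partial>N) < \<infinity>"
    using fin by (rule le_less_trans[rotated]) (intro nn_integral_mono gm_le)
  have AEp: "AE x in N. gp x \<noteq> \<infinity>" by (rule nn_integral_PInf_AE) (use gp_fin in auto)
  have AEm: "AE x in N. gm x \<noteq> \<infinity>" by (rule nn_integral_PInf_AE) (use gm_fin in auto)
  have ip: "integrable N (\<lambda>x. enn2real (gp x))"
  proof (intro integrableI_bounded)
    have "(\<integral>\<^sup>+x. ennreal (norm (enn2real (gp x))) \<partial>N) \<le> (\<integral>\<^sup>+x. gp x \<partial>N)"
      by (intro nn_integral_mono) (simp add: ennreal_enn2real_if)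
    then show "(\<integral>\<^sup>+x. ennreal (norm (enn2real (gp x))) \<partial>N) < \<infinity>" using gp_fin by (simp add: le_less_trans)
  qed measurable
  have im: "integrable N (\<lambda>x. enn2real (gm x))"
  proof (intro integrableI_bounded)
    have "(\<integral>\<^sup>+x. ennreal (norm (enn2real (gm x))) \<partial>N) \<le> (\<integral>\<^sup>+x. gm x \<partial>N)"
      by (intro nn_integral_mono) (simp add: ennreal_enn2real_if)
    then show "(\<integral>\<^sup>+x. ennreal (norm (enn2real (gm x))) \<partial>N) < \<infinity>" using gm_fin by (simp add: le_less_trans)
  qed measurable
  have ep: "(\<integral>x. enn2real (gp x) \<partial>N) = enn2real (\<integral>\<^sup>+x. gp x \<partial>N)"
  proof -
    have "(\<integral>\<^sup>+x. ennreal (enn2real (gp x)) \<partial>N) = (\<integral>\<^sup>+x. gp x \<partial>N)"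
      by (rule nn_integral_cong_AE) (use AEp in \<open>auto simp: ennreal_enn2real_if\<close>)
    then show ?thesis by (subst integral_eq_nn_integral) auto
  qed
  have em: "(\<integral>x. enn2real (gm x) \<partial>N) = enn2real (\<integral>\<^sup>+x. gm x \<partial>N)"
  proof -
    have "(\<integral>\<^sup>+x. ennreal (enn2real (gm x)) \<partial>N) = (\<integral>\<^sup>+x. gm x \<partial>N)"
      by (rule nn_integral_cong_AE) (use AEm in \<open>auto simp: ennreal_enn2real_if\<close>)
    then show ?thesis by (subst integral_eq_nn_integral) auto
  qed
  have "(\<integral>x. \<phi> x \<partial>(N \<bind> K)) = enn2real (\<integral>\<^sup>+x. gp x \<partial>N) - enn2real (\<integral>\<^sup>+x. gm x \<partial>N)"
    unfolding real_lebesgue_integral_def[OF int] gp_def gm_def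
    by (simp add: nn_integral_bind[OF _ K])
  also have "\<dots> = (\<integral>x. enn2real (gp x) - enn2real (gm x) \<partial>N)"
    using ep em ip im by simp
  also have "\<dots> = (\<integral>x. \<integral>y. \<phi> y \<partial>K x \<partial>N)"
  proof (rule integral_cong_AE)
    show "AE x in N. enn2real (gp x) - enn2real (gm x) = (\<integral>y. \<phi> y \<partial>K x)"
      using AEi by eventually_elim (simp add: real_lebesgue_integral_def gp_def gm_def)
  qed measurable
  finally show "(\<integral>x. \<phi> x \<partial>(N \<bind> K)) = (\<integral>x. \<integral>y. \<phi> y \<partial>K x \<partial>N)" .
qed

lemma cvx_powr:
  fixes s t l p :: real
  assumes "0 \<le> s" "0 \<le> t" "0 \<le> l" "l \<le> 1" "1 \<le> p"
  shows "(l * s + (1 - l) * t) powr p \<le> l * s powr p + (1 - l) * t powr p"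
proof -
  have key: "(l * s) powr p \<le> l * s powr p" if "0 \<le> l" "l \<le> 1" "0 \<le> s" for l s :: real
  proof (cases "l = 0")
    case False
    then have "l powr p \<le> l" using that assms(5) powr_le_one_le[of l p] by simp
    then show ?thesis using that by (simp add: powr_mult mult_right_mono)
  qed simp
  show ?thesis
  proof (cases "s = 0 \<or> t = 0")
    case True
    then show ?thesis
    proof
      assume "s = 0" then show ?thesis using key[of "1 - l" t] assms by simp
    next
      assume "t = 0" then show ?thesis using key[of l s] assms by simp
    qed
  next
    case False
    then have "s \<in> {0<..}" "t \<in> {0<..}" using assms by auto
    then show ?thesis
      using convex_onD[OF powr_convex[OF assms(5)], of "1 - l" s t] assms by simp
  qed
qed

lemma abs_powr_convex:
  fixes p :: real assumes "1 \<le> p"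
  shows "convex_on UNIV (\<lambda>x::real. \<bar>x\<bar> powr p)"
proof (rule convex_onI)
  fix t x y :: real assume t: "0 < t" "t < 1" and "x \<in> UNIV" "y \<in> UNIV"
  have "\<bar>(1 - t) * x + t * y\<bar> powr p \<le> ((1 - t) * \<bar>x\<bar> + t * \<bar>y\<bar>) powr p"
    using t assms by (intro powr_mono2) (auto intro!: order_trans[OF abs_triangle_ineq] simp: abs_mult)
  also have "\<dots> = (t * \<bar>y\<bar> + (1 - t) * \<bar>x\<bar>) powr p" by (simp add: ac_simps)
  also have "\<dots> \<le> t * \<bar>y\<bar> powr p + (1 - t) * \<bar>x\<bar> powr p"
    using t assms by (intro cvx_powr) auto
  finally show "\<bar>(1 - t) *\<^sub>R x + t *\<^sub>R y\<bar> powr p \<le> (1 - t) * \<bar>x\<bar> powr p + t * \<bar>y\<bar> powr p" by simp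
qed simp

lemma powr_add_bound:
  fixes a b p :: real assumes "0 \<le> p"
  shows "\<bar>a + b\<bar> powr p \<le> 2 powr p * (\<bar>a\<bar> powr p + \<bar>b\<bar> powr p)"
proof -
  have "\<bar>a + b\<bar> \<le> 2 * max \<bar>a\<bar> \<bar>b\<bar>" by auto
  then have "\<bar>a + b\<bar> powr p \<le> (2 * max \<bar>a\<bar> \<bar>b\<bar>) powr p" using assms by (intro powr_mono2) auto
  also have "\<dots> = 2 powr p * max \<bar>a\<bar> \<bar>b\<bar> powr p" by (simp add: powr_mult)
  also have "max \<bar>a\<bar> \<bar>b\<bar> powr p \<le> \<bar>a\<bar> powr p + \<bar>b\<bar> powr p" by (simp add: max_def)
  finally show ?thesis by (simp add: mult_left_mono)
qed

definition Lpi :: "'a measure \<Rightarrow> real \<Rightarrow> ('a \<Rightarrow> real) \<Rightarrow> bool" where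
  "Lpi M p u \<longleftrightarrow> u \<in> borel_measurable M \<and> integrable M (\<lambda>\<omega>. \<bar>u \<omega>\<bar> powr p)"

lemma Lpi_add:
  assumes "0 \<le> p" "Lpi M p u" "Lpi M p v"
  shows "Lpi M p (\<lambda>\<omega>. u \<omega> + v \<omega>)"
  unfolding Lpi_def
proof
  show m: "(\<lambda>\<omega>. u \<omega> + v \<omega>) \<in> borel_measurable M" using assms by (auto simp: Lpi_def)
  show "integrable M (\<lambda>\<omega>. \<bar>u \<omega> + v \<omega>\<bar> powr p)"
  proof (rule Bochner_Integration.integrable_bound)
    show "integrable M (\<lambda>\<omega>. 2 powr p * (\<bar>u \<omega>\<bar> powr p + \<bar>v \<omega>\<bar> powr p))"
      using assms by (auto simp: Lpi_def)
    show "(\<lambda>\<omega>. \<bar>u \<omega> + v \<omega>\<bar> powr p) \<in> borel_measurable M" using m by measurable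
    show "AE \<omega> in M. norm (\<bar>u \<omega> + v \<omega>\<bar> powr p) \<le> norm (2 powr p * (\<bar>u \<omega>\<bar> powr p + \<bar>v \<omega>\<bar> powr p))"
      using powr_add_bound[OF assms(1)] by auto
  qed
qed

lemma Lpi_cmult:
  assumes "Lpi M p u" shows "Lpi M p (\<lambda>\<omega>. c * u \<omega>)"
  using assms by (auto simp: Lpi_def abs_mult powr_mult)

lemma Lpi_sum:
  assumes "0 \<le> p" "\<And>i. i \<in> I \<Longrightarrow> Lpi M p (u i)"
  shows "Lpi M p (\<lambda>\<omega>. \<Sum>i\<in>I. u i \<omega>)"
  using assms(2)
proof (induction I rule: infinite_finite_induct)
  case (infinite A) then show ?case by (simp add: Lpi_def)
next
  case empty then show ?case by (simp add: Lpi_def)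
next
  case (insert x F)
  then show ?case using Lpi_add[OF assms(1), of M "u x" "\<lambda>\<omega>. \<Sum>i\<in>F. u i \<omega>"] by simp
qed

lemma Lpi_diff:
  assumes "0 \<le> p" "Lpi M p u" "Lpi M p v"
  shows "Lpi M p (\<lambda>\<omega>. u \<omega> - v \<omega>)"
  using Lpi_add[OF assms(1,2) Lpi_cmult[OF assms(3), of "-1"]] by simp

lemma Lp_norm_nonneg: "0 \<le> Lp_norm M p u" unfolding Lp_norm_def by simp

lemma Lp_norm_cong_AE:
  assumes "AE \<omega> in M. u \<omega> = v \<omega>" "u \<in> borel_measurable M" "v \<in> borel_measurable M"
  shows "Lp_norm M p u = Lp_norm M p v"
  unfolding Lp_norm_def using assms by (subst integral_cong_AE[where g="\<lambda>\<omega>. \<bar>v \<omega>\<bar> powr p"]) auto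

lemma Lp_norm_cmult:
  assumes "0 < p"
  shows "Lp_norm M p (\<lambda>\<omega>. c * u \<omega>) = \<bar>c\<bar> * Lp_norm M p u"
proof -
  have "(\<integral>\<omega>. \<bar>c * u \<omega>\<bar> powr p \<partial>M) = \<bar>c\<bar> powr p * (\<integral>\<omega>. \<bar>u \<omega>\<bar> powr p \<partial>M)"
    by (simp add: abs_mult powr_mult)
  then have "Lp_norm M p (\<lambda>\<omega>. c * u \<omega>) = (\<bar>c\<bar> powr p) powr (1/p) * Lp_norm M p u"
    unfolding Lp_norm_def by (simp add: powr_mult)
  also have "(\<bar>c\<bar> powr p) powr (1/p) = \<bar>c\<bar>" using assms by (simp add: powr_powr)
  finally show ?thesis .
qed

lemma Lp_norm_mono:
  assumes "0 < p" "AE \<omega> in M. \<bar>u \<omega>\<bar> \<le> \<bar>v \<omega>\<bar>" "u \<in> borel_measurable M" "Lpi M p v"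
  shows "Lp_norm M p u \<le> Lp_norm M p v"
proof -
  have "(\<integral>\<omega>. \<bar>u \<omega>\<bar> powr p \<partial>M) \<le> (\<integral>\<omega>. \<bar>v \<omega>\<bar> powr p \<partial>M)"
  proof (rule integral_mono_AE')
    show "integrable M (\<lambda>\<omega>. \<bar>v \<omega>\<bar> powr p)" using assms by (simp add: Lpi_def)
    show "AE \<omega> in M. \<bar>u \<omega>\<bar> powr p \<le> \<bar>v \<omega>\<bar> powr p" using assms(2) by eventually_elim (use assms(1) in \<open>auto intro: powr_mono2\<close>)
    show "AE \<omega> in M. 0 \<le> \<bar>v \<omega>\<bar> powr p" by simp
  qed
  then show ?thesis unfolding Lp_norm_def using assms(1)
    by (intro powr_mono2) (auto intro!: integral_nonneg_AE)
qed

lemma Lp_zero_AE: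
  assumes "0 < p" "Lpi M p u" "Lp_norm M p u = 0"
  shows "AE \<omega> in M. u \<omega> = 0"
proof -
  have "(\<integral>\<omega>. \<bar>u \<omega>\<bar> powr p \<partial>M) = 0" using assms(3) unfolding Lp_norm_def by simp
  then have "AE \<omega> in M. \<bar>u \<omega>\<bar> powr p = 0"
    using integral_nonneg_eq_0_iff_AE[of M "\<lambda>\<omega>. \<bar>u \<omega>\<bar> powr p"] assms(2) by (simp add: Lpi_def)
  then show ?thesis by auto
qed

lemma Minkowski:
  assumes p: "1 \<le> p" and u: "Lpi M p u" and v: "Lpi M p v"
  shows "Lp_norm M p (\<lambda>\<omega>. u \<omega> + v \<omega>) \<le> Lp_norm M p u + Lp_norm M p v"
proof -
  have p0: "0 < p" using p by simp
  have um[measurable]: "u \<in> borel_measurable M" and vm[measurable]: "v \<in> borel_measurable M"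
    using u v by (auto simp: Lpi_def)
  have uv: "Lpi M p (\<lambda>\<omega>. u \<omega> + v \<omega>)" by (rule Lpi_add) (use p u v in auto)
  define X where "X = (\<integral>\<omega>. \<bar>u \<omega>\<bar> powr p \<partial>M)"
  define Y where "Y = (\<integral>\<omega>. \<bar>v \<omega>\<bar> powr p \<partial>M)"
  define Z where "Z = (\<integral>\<omega>. \<bar>u \<omega> + v \<omega>\<bar> powr p \<partial>M)"
  define A where "A = Lp_norm M p u"
  define B where "B = Lp_norm M p v"
  have X0: "0 \<le> X" "0 \<le> Y" "0 \<le> Z" unfolding X_def Y_def Z_def by auto
  have AX: "A = X powr (1/p)" "B = Y powr (1/p)" unfolding A_def B_def X_def Y_def Lp_norm_def by auto
  have XA: "X = A powr p" "Y = B powr p" using X0 p0 by (auto simp: AX powr_powr)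
  show ?thesis
  proof (cases "A = 0 \<or> B = 0")
    case True
    then show ?thesis
    proof
      assume "A = 0"
      then have "AE \<omega> in M. u \<omega> = 0" using Lp_zero_AE[OF p0 u] by (simp add: A_def)
      then have "Lp_norm M p (\<lambda>\<omega>. u \<omega> + v \<omega>) = Lp_norm M p v"
        by (intro Lp_norm_cong_AE) auto
      then show ?thesis using \<open>A = 0\<close> by (simp add: A_def)
    next
      assume "B = 0"
      then have "AE \<omega> in M. v \<omega> = 0" using Lp_zero_AE[OF p0 v] by (simp add: B_def)
      then have "Lp_norm M p (\<lambda>\<omega>. u \<omega> + v \<omega>) = Lp_norm M p u"
        by (intro Lp_norm_cong_AE) auto
      then show ?thesis using \<open>B = 0\<close> by (simp add: B_def)
    qed
  next
    case False
    then have A0: "0 < A" "0 < B" using Lp_norm_nonneg[of M p] by (auto simp: A_def B_def order_le_less)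
    then have Xp: "0 < X" "0 < Y" using XA by auto
    define l where "l = A / (A + B)"
    have l: "0 \<le> l" "l \<le> 1" "1 - l = B / (A + B)" using A0 by (auto simp: l_def field_simps)
    have pw: "\<bar>u \<omega> + v \<omega>\<bar> powr p \<le> (A + B) powr p * (l / X * \<bar>u \<omega>\<bar> powr p + (1 - l) / Y * \<bar>v \<omega>\<bar> powr p)" for \<omega>
    proof -
      have "\<bar>u \<omega> + v \<omega>\<bar> \<le> (A + B) * (l * (\<bar>u \<omega>\<bar> / A) + (1 - l) * (\<bar>v \<omega>\<bar> / B))"
      proof -
        have "(A + B) * (l * (\<bar>u \<omega>\<bar> / A) + (1 - l) * (\<bar>v \<omega>\<bar> / B)) = \<bar>u \<omega>\<bar> + \<bar>v \<omega>\<bar>"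
        proof -
          have e1: "(A + B) * (l * (\<bar>u \<omega>\<bar> / A)) = \<bar>u \<omega>\<bar>" using A0 by (simp add: l_def)
          have e2: "(A + B) * ((1 - l) * (\<bar>v \<omega>\<bar> / B)) = \<bar>v \<omega>\<bar>" using A0 unfolding l(3) by simp
          show ?thesis using e1 e2 by (simp add: distrib_left)
        qed
        then show ?thesis by (simp add: abs_triangle_ineq)
      qed
      then have "\<bar>u \<omega> + v \<omega>\<bar> powr p \<le> ((A + B) * (l * (\<bar>u \<omega>\<bar> / A) + (1 - l) * (\<bar>v \<omega>\<bar> / B))) powr p"
        using p0 by (intro powr_mono2) auto
      also have "\<dots> = (A + B) powr p * (l * (\<bar>u \<omega>\<bar> / A) + (1 - l) * (\<bar>v \<omega>\<bar> / B)) powr p"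
        using A0 by (simp add: powr_mult)
      also have "\<dots> \<le> (A + B) powr p * (l * (\<bar>u \<omega>\<bar> / A) powr p + (1 - l) * (\<bar>v \<omega>\<bar> / B) powr p)"
        using A0 l p by (intro mult_left_mono cvx_powr) auto
      also have "\<dots> = (A + B) powr p * (l / X * \<bar>u \<omega>\<bar> powr p + (1 - l) / Y * \<bar>v \<omega>\<bar> powr p)"
        using A0 XA by (simp add: powr_divide)
      finally show ?thesis .
    qed
    have "Z \<le> (\<integral>\<omega>. (A + B) powr p * (l / X * \<bar>u \<omega>\<bar> powr p + (1 - l) / Y * \<bar>v \<omega>\<bar> powr p) \<partial>M)"
      unfolding Z_def
      by (rule integral_mono) (use uv u v pw in \<open>auto simp: Lpi_def\<close>)
    also have "\<dots> = (A + B) powr p * (l / X * X + (1 - l) / Y * Y)"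
      using u v by (simp add: Lpi_def X_def Y_def)
    also have "\<dots> = (A + B) powr p" using Xp by simp
    finally have "Z powr (1/p) \<le> ((A + B) powr p) powr (1/p)"
      using X0 p0 by (intro powr_mono2) auto
    also have "\<dots> = A + B" using A0 p0 by (simp add: powr_powr)
    finally show ?thesis unfolding Lp_norm_def Z_def A_def B_def Lp_norm_def .
  qed
qed

lemma Minkowski_sum:
  assumes p: "1 \<le> p" and u: "\<And>i. i \<in> I \<Longrightarrow> Lpi M p (u i)"
  shows "Lp_norm M p (\<lambda>\<omega>. \<Sum>i\<in>I. u i \<omega>) \<le> (\<Sum>i\<in>I. Lp_norm M p (u i))"
  using u
proof (induction I rule: infinite_finite_induct)
  case (infinite A) then show ?case using p by (simp add: Lp_norm_def)
next
  case empty then show ?case using p by (simp add: Lp_norm_def)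
next
  case (insert x F)
  have "Lp_norm M p (\<lambda>\<omega>. \<Sum>i\<in>insert x F. u i \<omega>) = Lp_norm M p (\<lambda>\<omega>. u x \<omega> + (\<Sum>i\<in>F. u i \<omega>))"
    using insert by simp
  also have "\<dots> \<le> Lp_norm M p (u x) + Lp_norm M p (\<lambda>\<omega>. \<Sum>i\<in>F. u i \<omega>)"
    by (rule Minkowski[OF p]) (use insert p in \<open>auto intro!: Lpi_sum\<close>)
  also have "\<dots> \<le> Lp_norm M p (u x) + (\<Sum>i\<in>F. Lp_norm M p (u i))" using insert by simp
  finally show ?case using insert by simp
qed

locale rmc =
  fixes M :: "'a measure" and S :: "'s measure" and \<pi> :: "'s measure"
    and Q :: "'s \<Rightarrow> 's measure" and \<xi> :: "int \<Rightarrow> 'a \<Rightarrow> 's"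
  assumes chain: "stationary_reversible_markov M S \<pi> Q \<xi>"
begin

lemma PS: "prob_space M" using chain unfolding stationary_reversible_markov_def by blast

sublocale prob_space M by (rule PS)

lemma xi_meas[measurable]: "\<xi> k \<in> M \<rightarrow>\<^sub>M S" using chain unfolding stationary_reversible_markov_def by blast
lemma Q_meas[measurable]: "Q \<in> S \<rightarrow>\<^sub>M prob_algebra S" using chain unfolding stationary_reversible_markov_def by blast
lemma distr_xi: "distr M S (\<xi> k) = \<pi>" using chain unfolding stationary_reversible_markov_def by blast
lemma markov: "A \<in> sets S \<Longrightarrow> AE \<omega> in M.
        real_cond_exp M (past_alg M S \<xi> k) (indicator (\<xi> (k + 1) -` A \<inter> space M)) \<omega>
          = measure (Q (\<xi> k \<omega>)) A" using chain unfolding stationary_reversible_markov_def by blast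
lemma reversible: "distr M (S \<Otimes>\<^sub>M S) (\<lambda>\<omega>. (\<xi> 0 \<omega>, \<xi> 1 \<omega>)) = distr M (S \<Otimes>\<^sub>M S) (\<lambda>\<omega>. (\<xi> 1 \<omega>, \<xi> 0 \<omega>))"
  using chain unfolding stationary_reversible_markov_def by blast

lemma Q_sub[measurable]: "Q \<in> S \<rightarrow>\<^sub>M subprob_algebra S" by (rule measurable_prob_algebraD[OF Q_meas])
lemma Q_prob: "x \<in> space S \<Longrightarrow> prob_space (Q x)"
  using measurable_space[OF Q_meas] by (auto simp: space_prob_algebra)
lemma Q_sets: "x \<in> space S \<Longrightarrow> sets (Q x) = sets S"
  using measurable_space[OF Q_meas] by (auto simp: space_prob_algebra)

abbreviation "F k \<equiv> past_alg M S \<xi> k"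
abbreviation "G k \<equiv> future_alg M S \<xi> k"

lemma genF_sub: "{\<xi> i -` A \<inter> space M | i A. i \<le> k \<and> A \<in> sets S} \<subseteq> Pow (space M)" by auto
lemma genG_sub: "{\<xi> i -` A \<inter> space M | i A. k \<le> i \<and> A \<in> sets S} \<subseteq> Pow (space M)" by auto
lemma genF_M: "{\<xi> i -` A \<inter> space M | i A. i \<le> k \<and> A \<in> sets S} \<subseteq> sets M" by auto
lemma genG_M: "{\<xi> i -` A \<inter> space M | i A. k \<le> i \<and> A \<in> sets S} \<subseteq> sets M" by auto

lemma sets_F: "sets (F k) = sigma_sets (space M) {\<xi> i -` A \<inter> space M | i A. i \<le> k \<and> A \<in> sets S}"
  unfolding past_alg_def by (rule sets_measure_of[OF genF_sub])
lemma space_F[simp]: "space (F k) = space M"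
  unfolding past_alg_def by (rule space_measure_of[OF genF_sub])
lemma sets_G: "sets (G k) = sigma_sets (space M) {\<xi> i -` A \<inter> space M | i A. k \<le> i \<and> A \<in> sets S}"
  unfolding future_alg_def by (rule sets_measure_of[OF genG_sub])
lemma space_G[simp]: "space (G k) = space M"
  unfolding future_alg_def by (rule space_measure_of[OF genG_sub])

lemma subalg_F: "subalgebra M (F k)"
  unfolding subalgebra_def using sets.sigma_sets_subset[OF genF_M] by (simp add: sets_F)
lemma subalg_G: "subalgebra M (G k)"
  unfolding subalgebra_def using sets.sigma_sets_subset[OF genG_M] by (simp add: sets_G)

lemma F_mono: "j \<le> k \<Longrightarrow> subalgebra (F k) (F j)"
  unfolding subalgebra_def sets_F by (auto intro!: sigma_sets_mono' dest: order_trans)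
lemma G_mono: "k \<le> j \<Longrightarrow> subalgebra (G k) (G j)"
  unfolding subalgebra_def sets_G by (auto intro!: sigma_sets_mono' dest: order_trans)

lemma xi_F: "j \<le> k \<Longrightarrow> \<xi> j \<in> F k \<rightarrow>\<^sub>M S"
  by (rule measurableI) (auto simp: sets_F measurable_space[OF xi_meas] intro!: sigma_sets.Basic)
lemma xi_G: "k \<le> j \<Longrightarrow> \<xi> j \<in> G k \<rightarrow>\<^sub>M S"
  by (rule measurableI) (auto simp: sets_G measurable_space[OF xi_meas] intro!: sigma_sets.Basic)

lemma sfF: "sigma_finite_subalgebra M (F k)"
  by (rule finite_measure_subalgebra_is_sigma_finite) (simp add: finite_measure_subalgebra_def finite_measure_subalgebra_axioms_def subalg_F finite_measure_axioms)
lemma sfG: "sigma_finite_subalgebra M (G k)"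
  by (rule finite_measure_subalgebra_is_sigma_finite) (simp add: finite_measure_subalgebra_def finite_measure_subalgebra_axioms_def subalg_G finite_measure_axioms)

lemma int_xi: fixes \<phi> :: "'s \<Rightarrow> real" shows "integrable \<pi> \<phi> \<Longrightarrow> \<phi> \<in> borel_measurable S \<Longrightarrow> integrable M (\<lambda>\<omega>. \<phi> (\<xi> k \<omega>))"
  using integrable_distr_eq[OF xi_meas, of \<phi> k] distr_xi[of k] by simp
lemma int_xi_iff: fixes \<phi> :: "'s \<Rightarrow> real" shows "\<phi> \<in> borel_measurable S \<Longrightarrow> integrable M (\<lambda>\<omega>. \<phi> (\<xi> k \<omega>)) \<longleftrightarrow> integrable \<pi> \<phi>"
  using integrable_distr_eq[OF xi_meas, of \<phi> k] distr_xi[of k] by simp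
lemma integral_xi: fixes \<phi> :: "'s \<Rightarrow> real" shows "\<phi> \<in> borel_measurable S \<Longrightarrow> (\<integral>\<omega>. \<phi> (\<xi> k \<omega>) \<partial>M) = (\<integral>x. \<phi> x \<partial>\<pi>)"
  using integral_distr[OF xi_meas, of \<phi> k] distr_xi[of k] by simp

end

context rmc begin

definition P :: "('s \<Rightarrow> real) \<Rightarrow> 's \<Rightarrow> real" where
  "P \<phi> x = (\<integral>y. \<phi> y \<partial>Q x)"

lemma P_meas[measurable]: "\<phi> \<in> borel_measurable S \<Longrightarrow> P \<phi> \<in> borel_measurable S"
  unfolding P_def by (rule measurable_compose[OF Q_sub integral_measurable_subprob_algebra])

lemma markov_set:
  assumes A: "A \<in> sets (F k)" and B: "B \<in> sets S"
  shows "(\<integral>\<^sup>+\<omega>. indicator A \<omega> * indicator (\<xi> (k+1) -` B \<inter> space M) \<omega> \<partial>M)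
       = (\<integral>\<^sup>+\<omega>. indicator A \<omega> * emeasure (Q (\<xi> k \<omega>)) B \<partial>M)"
proof -
  interpret sigma_finite_subalgebra M "F k" by (rule sfF)
  have Am[measurable]: "A \<in> sets M" using A subalg_F[of k] by (auto simp: subalgebra_def)
  have Cm[measurable]: "\<xi> (k+1) -` B \<inter> space M \<in> sets M" using B by measurable
  have Aind[measurable]: "indicator A \<in> borel_measurable (F k)" using A by measurable
  have mQ[measurable]: "(\<lambda>\<omega>. measure (Q (\<xi> k \<omega>)) B) \<in> borel_measurable M"
    using B by measurable
  have i1: "integrable M (\<lambda>\<omega>. indicator A \<omega> * indicator (\<xi> (k+1) -` B \<inter> space M) \<omega> :: real)"
  proof (rule integrable_const_bound[where B=1])
    show "(\<lambda>\<omega>. indicator A \<omega> * indicator (\<xi> (k+1) -` B \<inter> space M) \<omega> :: real) \<in> borel_measurable M"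
      using Am Cm by measurable
  qed (auto simp: indicator_def)
  have i2: "integrable M (\<lambda>\<omega>. indicator A \<omega> * measure (Q (\<xi> k \<omega>)) B)"
    by (rule integrable_const_bound[where B=1]) (auto simp: indicator_def intro!: prob_space.prob_le_1 Q_prob measurable_space[OF xi_meas])
  have "(\<integral>\<omega>. indicator A \<omega> * indicator (\<xi> (k+1) -` B \<inter> space M) \<omega> \<partial>M :: real)
      = (\<integral>\<omega>. indicator A \<omega> * real_cond_exp M (F k) (indicator (\<xi> (k+1) -` B \<inter> space M)) \<omega> \<partial>M)"
    by (rule real_cond_exp_intg(2)[symmetric]) (use i1 in auto)
  also have "\<dots> = (\<integral>\<omega>. indicator A \<omega> * measure (Q (\<xi> k \<omega>)) B \<partial>M)"
    by (rule integral_cong_AE) (use markov[OF B, of k] in auto)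
  finally have eq: "(\<integral>\<omega>. indicator A \<omega> * indicator (\<xi> (k+1) -` B \<inter> space M) \<omega> \<partial>M :: real)
      = (\<integral>\<omega>. indicator A \<omega> * measure (Q (\<xi> k \<omega>)) B \<partial>M)" .
  have "(\<integral>\<^sup>+\<omega>. indicator A \<omega> * indicator (\<xi> (k+1) -` B \<inter> space M) \<omega> \<partial>M)
       = (\<integral>\<^sup>+\<omega>. ennreal (indicator A \<omega> * indicator (\<xi> (k+1) -` B \<inter> space M) \<omega>) \<partial>M)"
    by (intro nn_integral_cong) (auto simp: indicator_def)
  also have "\<dots> = ennreal (\<integral>\<omega>. indicator A \<omega> * indicator (\<xi> (k+1) -` B \<inter> space M) \<omega> \<partial>M)"
    by (rule nn_integral_eq_integral[OF i1]) auto
  also have "\<dots> = ennreal (\<integral>\<omega>. indicator A \<omega> * measure (Q (\<xi> k \<omega>)) B \<partial>M)" using eq by simp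
  also have "\<dots> = (\<integral>\<^sup>+\<omega>. ennreal (indicator A \<omega> * measure (Q (\<xi> k \<omega>)) B) \<partial>M)"
    by (rule nn_integral_eq_integral[OF i2, symmetric]) auto
  also have "\<dots> = (\<integral>\<^sup>+\<omega>. indicator A \<omega> * emeasure (Q (\<xi> k \<omega>)) B \<partial>M)"
  proof (intro nn_integral_cong)
    fix \<omega> assume "\<omega> \<in> space M"
    then have "prob_space (Q (\<xi> k \<omega>))" by (intro Q_prob measurable_space[OF xi_meas])
    then show "ennreal (indicator A \<omega> * measure (Q (\<xi> k \<omega>)) B) = indicator A \<omega> * emeasure (Q (\<xi> k \<omega>)) B"
      by (simp add: indicator_def finite_measure.emeasure_eq_measure prob_space.finite_measure)
  qed
  finally show ?thesis .
qed

lemma markov_int: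
  fixes \<phi> :: "'s \<Rightarrow> real"
  assumes A: "A \<in> sets (F k)" and \<phi>[measurable]: "\<phi> \<in> borel_measurable S" and i\<phi>: "integrable \<pi> \<phi>"
  shows "integrable M (\<lambda>\<omega>. indicator A \<omega> * P \<phi> (\<xi> k \<omega>))"
    "(\<integral>\<omega>. indicator A \<omega> * \<phi> (\<xi> (k+1) \<omega>) \<partial>M) = (\<integral>\<omega>. indicator A \<omega> * P \<phi> (\<xi> k \<omega>) \<partial>M)"
proof -
  have Am[measurable]: "A \<in> sets M" using A subalg_F[of k] by (auto simp: subalgebra_def)
  define N where "N = density M (\<lambda>x. ennreal (indicator A x))"
  have sN: "sets N = sets M" "space N = space M" unfolding N_def by auto
  have neN: "space N \<noteq> {}" using sN not_empty by simp
  have K: "(\<lambda>\<omega>. Q (\<xi> k \<omega>)) \<in> N \<rightarrow>\<^sub>M subprob_algebra S"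
    using sN(1) by (simp cong: measurable_cong_sets)
  have xiN: "\<xi> (k+1) \<in> N \<rightarrow>\<^sub>M S" using sN(1) by (simp cong: measurable_cong_sets)
  have eqm: "distr N S (\<xi> (k+1)) = N \<bind> (\<lambda>\<omega>. Q (\<xi> k \<omega>))"
  proof (rule measure_eqI)
    show "sets (distr N S (\<xi> (k+1))) = sets (N \<bind> (\<lambda>\<omega>. Q (\<xi> k \<omega>)))"
      using sets_bind[OF sets_kernel[OF K] neN] by simp
    fix B assume "B \<in> sets (distr N S (\<xi> (k+1)))"
    then have B[measurable]: "B \<in> sets S" by simp
    have "emeasure (distr N S (\<xi> (k+1))) B = emeasure N (\<xi> (k+1) -` B \<inter> space M)"
      using xiN sN by (simp add: emeasure_distr)
    also have "\<dots> = (\<integral>\<^sup>+\<omega>. indicator A \<omega> * indicator (\<xi> (k+1) -` B \<inter> space M) \<omega> \<partial>M)"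
      unfolding N_def by (subst emeasure_density) (auto simp: nn_integral_set_ennreal mult.commute intro!: nn_integral_cong split: split_indicator)
    also have "\<dots> = (\<integral>\<^sup>+\<omega>. indicator A \<omega> * emeasure (Q (\<xi> k \<omega>)) B \<partial>M)"
      by (rule markov_set[OF A B])
    also have "\<dots> = emeasure (N \<bind> (\<lambda>\<omega>. Q (\<xi> k \<omega>))) B"
      unfolding emeasure_bind[OF neN K B] unfolding N_def
      by (subst nn_integral_density) (auto intro!: nn_integral_cong split: split_indicator)
    finally show "emeasure (distr N S (\<xi> (k+1))) B = emeasure (N \<bind> (\<lambda>\<omega>. Q (\<xi> k \<omega>))) B" .
  qed
  have iM: "integrable M (\<lambda>\<omega>. \<phi> (\<xi> (k+1) \<omega>))" by (rule int_xi[OF i\<phi> \<phi>])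
  have iA: "integrable M (\<lambda>\<omega>. indicator A \<omega> * \<phi> (\<xi> (k+1) \<omega>))"
    using integrable_mult_indicator[OF Am iM] by simp
  have iN: "integrable N (\<lambda>\<omega>. \<phi> (\<xi> (k+1) \<omega>))"
    unfolding N_def by (subst integrable_density) (use iA in auto)
  have ib: "integrable (N \<bind> (\<lambda>\<omega>. Q (\<xi> k \<omega>))) \<phi>"
    using iN eqm[symmetric] integrable_distr_eq[OF xiN \<phi>] by simp
  note R = integral_bind_integrable[OF K neN \<phi> ib]
  from R(2) have "integrable N (\<lambda>\<omega>. P \<phi> (\<xi> k \<omega>))" unfolding P_def .
  then show "integrable M (\<lambda>\<omega>. indicator A \<omega> * P \<phi> (\<xi> k \<omega>))"
    unfolding N_def by (subst (asm) integrable_density) auto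
  have "(\<integral>\<omega>. indicator A \<omega> * \<phi> (\<xi> (k+1) \<omega>) \<partial>M) = (\<integral>\<omega>. \<phi> (\<xi> (k+1) \<omega>) \<partial>N)"
    unfolding N_def by (subst integral_density) auto
  also have "\<dots> = (\<integral>x. \<phi> x \<partial>distr N S (\<xi> (k+1)))" by (rule integral_distr[OF xiN \<phi>, symmetric])
  also have "\<dots> = (\<integral>\<omega>. P \<phi> (\<xi> k \<omega>) \<partial>N)" unfolding eqm R(3) P_def ..
  also have "\<dots> = (\<integral>\<omega>. indicator A \<omega> * P \<phi> (\<xi> k \<omega>) \<partial>M)"
    unfolding N_def by (subst integral_density) auto
  finally show "(\<integral>\<omega>. indicator A \<omega> * \<phi> (\<xi> (k+1) \<omega>) \<partial>M) = (\<integral>\<omega>. indicator A \<omega> * P \<phi> (\<xi> k \<omega>) \<partial>M)" .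
qed

end

context rmc begin

lemma F_top: "space M \<in> sets (F k)" using sets.top[of "F k"] by simp

lemma markov_ce:
  fixes \<phi> :: "'s \<Rightarrow> real"
  assumes \<phi>[measurable]: "\<phi> \<in> borel_measurable S" and i\<phi>: "integrable \<pi> \<phi>"
  shows "integrable \<pi> (P \<phi>)"
    "AE \<omega> in M. real_cond_exp M (F k) (\<lambda>\<omega>. \<phi> (\<xi> (k+1) \<omega>)) \<omega> = P \<phi> (\<xi> k \<omega>)"
proof -
  interpret sigma_finite_subalgebra M "F k" by (rule sfF)
  have iP: "integrable M (\<lambda>\<omega>. P \<phi> (\<xi> k \<omega>))"
    by (rule Bochner_Integration.integrable_cong[THEN iffD1, OF refl _ markov_int(1)[OF F_top \<phi> i\<phi>, of k]]) simp
  then show "integrable \<pi> (P \<phi>)" using int_xi_iff[of "P \<phi>" k] by simp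
  show "AE \<omega> in M. real_cond_exp M (F k) (\<lambda>\<omega>. \<phi> (\<xi> (k+1) \<omega>)) \<omega> = P \<phi> (\<xi> k \<omega>)"
  proof (rule real_cond_exp_charact)
    fix A assume A: "A \<in> sets (F k)"
    show "(\<integral>\<omega>\<in>A. \<phi> (\<xi> (k+1) \<omega>) \<partial>M) = (\<integral>\<omega>\<in>A. P \<phi> (\<xi> k \<omega>) \<partial>M)"
      unfolding set_lebesgue_integral_def using markov_int(2)[OF A \<phi> i\<phi>] by simp
  next
    show "integrable M (\<lambda>\<omega>. \<phi> (\<xi> (k+1) \<omega>))" by (rule int_xi[OF i\<phi> \<phi>])
    show "integrable M (\<lambda>\<omega>. P \<phi> (\<xi> k \<omega>))" by (rule iP)
    show "(\<lambda>\<omega>. P \<phi> (\<xi> k \<omega>)) \<in> borel_measurable (F k)"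
      by (rule measurable_compose[OF xi_F P_meas[OF \<phi>]]) simp
  qed
qed

lemma Pn:
  fixes \<phi> :: "'s \<Rightarrow> real"
  assumes "\<phi> \<in> borel_measurable S" and "integrable \<pi> \<phi>"
  shows "(P ^^ m) \<phi> \<in> borel_measurable S \<and> integrable \<pi> ((P ^^ m) \<phi>) \<and>
    (\<forall>k. AE \<omega> in M. real_cond_exp M (F k) (\<lambda>\<omega>. \<phi> (\<xi> (k + int m) \<omega>)) \<omega> = (P ^^ m) \<phi> (\<xi> k \<omega>))"
  using assms
proof (induction m arbitrary: \<phi>)
  case 0
  have "AE \<omega> in M. real_cond_exp M (F k) (\<lambda>\<omega>. \<phi> (\<xi> k \<omega>)) \<omega> = \<phi> (\<xi> k \<omega>)" for k
  proof -
    interpret sigma_finite_subalgebra M "F k" by (rule sfF)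
    show ?thesis
      by (rule real_cond_exp_F_meas) (use 0 in \<open>auto intro: int_xi measurable_compose[OF xi_F]\<close>)
  qed
  then show ?case using 0 by simp
next
  case (Suc m)
  note \<phi>[measurable] = Suc.prems(1)
  have P\<phi>: "P \<phi> \<in> borel_measurable S" "integrable \<pi> (P \<phi>)" using markov_ce(1)[OF \<phi> Suc.prems(2)] by auto
  note IH = Suc.IH[OF P\<phi>]
  have eq: "(P ^^ Suc m) \<phi> = (P ^^ m) (P \<phi>)" by (simp add: funpow_Suc_right del: funpow.simps)
  have "AE \<omega> in M. real_cond_exp M (F k) (\<lambda>\<omega>. \<phi> (\<xi> (k + int (Suc m)) \<omega>)) \<omega> = (P ^^ m) (P \<phi>) (\<xi> k \<omega>)" for k
  proof -
    interpret sigma_finite_subalgebra M "F k" by (rule sfF)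
    have i1: "integrable M (\<lambda>\<omega>. \<phi> (\<xi> (k + int m + 1) \<omega>))" by (rule int_xi[OF Suc.prems(2) \<phi>])
    have "AE \<omega> in M. real_cond_exp M (F k) (real_cond_exp M (F (k + int m)) (\<lambda>\<omega>. \<phi> (\<xi> (k + int m + 1) \<omega>))) \<omega>
        = real_cond_exp M (F k) (\<lambda>\<omega>. \<phi> (\<xi> (k + int m + 1) \<omega>)) \<omega>"
      by (rule real_cond_exp_nested_subalg[OF subalg_F F_mono i1]) simp
    moreover have "AE \<omega> in M. real_cond_exp M (F k) (real_cond_exp M (F (k + int m)) (\<lambda>\<omega>. \<phi> (\<xi> (k + int m + 1) \<omega>))) \<omega>
        = real_cond_exp M (F k) (\<lambda>\<omega>. P \<phi> (\<xi> (k + int m) \<omega>)) \<omega>"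
      by (rule real_cond_exp_cong) (use markov_ce(2)[OF \<phi> Suc.prems(2), of "k + int m"] in auto)
    moreover have "AE \<omega> in M. real_cond_exp M (F k) (\<lambda>\<omega>. P \<phi> (\<xi> (k + int m) \<omega>)) \<omega> = (P ^^ m) (P \<phi>) (\<xi> k \<omega>)"
      using IH by blast
    ultimately have "AE \<omega> in M. real_cond_exp M (F k) (\<lambda>\<omega>. \<phi> (\<xi> (k + int m + 1) \<omega>)) \<omega> = (P ^^ m) (P \<phi>) (\<xi> k \<omega>)"
      by auto
    moreover have e: "(\<lambda>\<omega>. \<phi> (\<xi> (k + int (Suc m)) \<omega>)) = (\<lambda>\<omega>. \<phi> (\<xi> (k + int m + 1) \<omega>))" by (simp add: ac_simps)
    ultimately show ?thesis by simp
  qed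
  then show ?case using IH eq by simp
qed

end

context rmc begin

lemma int_bdd:
  fixes f g :: "'a \<Rightarrow> real"
  assumes "integrable M f" "g \<in> borel_measurable M" "\<And>\<omega>. \<omega> \<in> space M \<Longrightarrow> \<bar>g \<omega>\<bar> \<le> c"
  shows "integrable M (\<lambda>\<omega>. f \<omega> * g \<omega>)"
proof (rule Bochner_Integration.integrable_bound[where f="\<lambda>\<omega>. \<bar>c\<bar> * f \<omega>"])
  show "integrable M (\<lambda>\<omega>. \<bar>c\<bar> * f \<omega>)" using assms(1) by simp
  show "(\<lambda>\<omega>. f \<omega> * g \<omega>) \<in> borel_measurable M" using assms by measurable
  show "AE x in M. norm (f x * g x) \<le> norm (\<bar>c\<bar> * f x)"
  proof (rule AE_I2)
    fix x assume "x \<in> space M"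
    then have "\<bar>g x\<bar> \<le> \<bar>c\<bar>" using assms(3) by fastforce
    then show "norm (f x * g x) \<le> norm (\<bar>c\<bar> * f x)"
      by (simp add: abs_mult mult.commute[of "\<bar>c\<bar>"] mult_left_mono)
  qed
qed

lemma bdd_int:
  fixes g :: "'a \<Rightarrow> real"
  assumes "g \<in> borel_measurable M" "\<And>\<omega>. \<omega> \<in> space M \<Longrightarrow> \<bar>g \<omega>\<bar> \<le> c"
  shows "integrable M g"
  by (rule integrable_const_bound[where B=c]) (use assms in auto)

lemma bdd_int_pi:
  fixes \<psi> :: "'s \<Rightarrow> real"
  assumes [measurable]: "\<psi> \<in> borel_measurable S" and b: "\<And>x. x \<in> space S \<Longrightarrow> \<bar>\<psi> x\<bar> \<le> c"
  shows "integrable \<pi> \<psi>"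
proof -
  have "integrable M (\<lambda>\<omega>. \<psi> (\<xi> 0 \<omega>))"
    by (rule bdd_int[where c=c]) (auto intro!: b measurable_space[OF xi_meas])
  then show ?thesis using int_xi_iff[of \<psi> 0] by simp
qed

lemma P_bound:
  fixes \<psi> :: "'s \<Rightarrow> real"
  assumes [measurable]: "\<psi> \<in> borel_measurable S" and b: "\<And>x. x \<in> space S \<Longrightarrow> \<bar>\<psi> x\<bar> \<le> c"
    and x: "x \<in> space S"
  shows "\<bar>P \<psi> x\<bar> \<le> c"
proof -
  interpret Qx: prob_space "Q x" by (rule Q_prob[OF x])
  have sQ: "sets (Q x) = sets S" "space (Q x) = space S" using Q_sets[OF x] sets_eq_imp_space_eq by auto
  have m: "\<psi> \<in> borel_measurable (Q x)" using sQ by (simp cong: measurable_cong_sets)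
  have i: "integrable (Q x) (\<lambda>y. \<bar>\<psi> y\<bar>)"
    by (rule Qx.integrable_const_bound[where B=c]) (use b sQ m in auto)
  have "\<bar>P \<psi> x\<bar> \<le> (\<integral>y. \<bar>\<psi> y\<bar> \<partial>Q x)" unfolding P_def by simp
  also have "\<dots> \<le> c" by (rule Qx.integral_le_const[OF i]) (use b sQ in auto)
  finally show ?thesis .
qed

lemma H1:
  fixes u v :: "'s \<Rightarrow> real"
  assumes [measurable]: "u \<in> borel_measurable S" "v \<in> borel_measurable S" and iv: "integrable \<pi> v"
    and iuv: "integrable M (\<lambda>\<omega>. u (\<xi> k \<omega>) * v (\<xi> (k+1) \<omega>))"
  shows "(\<integral>\<omega>. u (\<xi> k \<omega>) * v (\<xi> (k+1) \<omega>) \<partial>M) = (\<integral>\<omega>. u (\<xi> k \<omega>) * P v (\<xi> k \<omega>) \<partial>M)"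
proof -
  interpret sigma_finite_subalgebra M "F k" by (rule sfF)
  have uF: "(\<lambda>\<omega>. u (\<xi> k \<omega>)) \<in> borel_measurable (F k)"
    by (rule measurable_compose[OF xi_F]) auto
  have "(\<integral>\<omega>. u (\<xi> k \<omega>) * v (\<xi> (k+1) \<omega>) \<partial>M)
      = (\<integral>\<omega>. u (\<xi> k \<omega>) * real_cond_exp M (F k) (\<lambda>\<omega>. v (\<xi> (k+1) \<omega>)) \<omega> \<partial>M)"
    by (rule real_cond_exp_intg(2)[symmetric, OF iuv uF]) measurable
  also have "\<dots> = (\<integral>\<omega>. u (\<xi> k \<omega>) * P v (\<xi> k \<omega>) \<partial>M)"
    by (rule integral_cong_AE) (use markov_ce(2)[OF assms(2) iv, of k] in auto)
  finally show ?thesis .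
qed

lemma pair_rev:
  fixes \<phi> \<psi> :: "'s \<Rightarrow> real"
  assumes \<phi>[measurable]: "\<phi> \<in> borel_measurable S" and i\<phi>: "integrable \<pi> \<phi>"
    and \<psi>[measurable]: "\<psi> \<in> borel_measurable S" and b: "\<And>x. x \<in> space S \<Longrightarrow> \<bar>\<psi> x\<bar> \<le> c"
  shows "(\<integral>\<omega>. \<phi> (\<xi> i \<omega>) * \<psi> (\<xi> (i+1) \<omega>) \<partial>M) = (\<integral>\<omega>. P \<phi> (\<xi> (i+1) \<omega>) * \<psi> (\<xi> (i+1) \<omega>) \<partial>M)"
proof -
  have i\<psi>: "integrable \<pi> \<psi>" by (rule bdd_int_pi[OF \<psi> b])
  have bx: "\<omega> \<in> space M \<Longrightarrow> \<bar>\<psi> (\<xi> k \<omega>)\<bar> \<le> c" for \<omega> k by (intro b measurable_space[OF xi_meas])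
  have iprod: "integrable M (\<lambda>\<omega>. \<phi> (\<xi> k \<omega>) * \<psi> (\<xi> j \<omega>))" for k j
    by (rule int_bdd[OF int_xi[OF i\<phi> \<phi>] _ bx]) measurable
  have iprod': "integrable M (\<lambda>\<omega>. \<psi> (\<xi> j \<omega>) * \<phi> (\<xi> k \<omega>))" for k j
    using iprod[of k j] by (simp add: mult.commute)
  have P\<phi>[measurable]: "P \<phi> \<in> borel_measurable S" by (rule P_meas[OF \<phi>])
  have P\<psi>[measurable]: "P \<psi> \<in> borel_measurable S" by (rule P_meas[OF \<psi>])
  have "(\<integral>\<omega>. \<phi> (\<xi> i \<omega>) * \<psi> (\<xi> (i+1) \<omega>) \<partial>M) = (\<integral>\<omega>. \<phi> (\<xi> i \<omega>) * P \<psi> (\<xi> i \<omega>) \<partial>M)"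
    by (rule H1[OF \<phi> \<psi> i\<psi> iprod])
  also have "\<dots> = (\<integral>x. \<phi> x * P \<psi> x \<partial>\<pi>)" by (rule integral_xi[of "\<lambda>x. \<phi> x * P \<psi> x"]) measurable
  also have "\<dots> = (\<integral>\<omega>. \<phi> (\<xi> 0 \<omega>) * P \<psi> (\<xi> 0 \<omega>) \<partial>M)" by (rule integral_xi[of "\<lambda>x. \<phi> x * P \<psi> x", symmetric]) measurable
  also have "\<dots> = (\<integral>\<omega>. \<phi> (\<xi> 0 \<omega>) * \<psi> (\<xi> 1 \<omega>) \<partial>M)"
    using H1[OF \<phi> \<psi> i\<psi> iprod, of 0] by simp
  also have "\<dots> = (\<integral>z. \<phi> (fst z) * \<psi> (snd z) \<partial>distr M (S \<Otimes>\<^sub>M S) (\<lambda>\<omega>. (\<xi> 0 \<omega>, \<xi> 1 \<omega>)))"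
    by (subst integral_distr) auto
  also have "\<dots> = (\<integral>z. \<phi> (fst z) * \<psi> (snd z) \<partial>distr M (S \<Otimes>\<^sub>M S) (\<lambda>\<omega>. (\<xi> 1 \<omega>, \<xi> 0 \<omega>)))"
    by (simp add: reversible)
  also have "\<dots> = (\<integral>\<omega>. \<psi> (\<xi> 0 \<omega>) * \<phi> (\<xi> 1 \<omega>) \<partial>M)"
    by (subst integral_distr) (auto simp: mult.commute)
  also have "\<dots> = (\<integral>\<omega>. \<psi> (\<xi> 0 \<omega>) * P \<phi> (\<xi> 0 \<omega>) \<partial>M)"
    using H1[OF \<psi> \<phi> i\<phi> iprod', of 0] by simp
  also have "\<dots> = (\<integral>x. \<psi> x * P \<phi> x \<partial>\<pi>)" by (rule integral_xi[of "\<lambda>x. \<psi> x * P \<phi> x"]) measurable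
  also have "\<dots> = (\<integral>\<omega>. \<psi> (\<xi> (i+1) \<omega>) * P \<phi> (\<xi> (i+1) \<omega>) \<partial>M)" by (rule integral_xi[of "\<lambda>x. \<psi> x * P \<phi> x", symmetric]) measurable
  finally show ?thesis by (simp add: mult.commute)
qed

end

context rmc begin

definition Wc :: "int \<Rightarrow> nat \<Rightarrow> (nat \<Rightarrow> 's set) \<Rightarrow> 'a \<Rightarrow> real" where
  "Wc i N B \<omega> = (\<Prod>j<N. indicator (B j) (\<xi> (i + int j) \<omega>))"

lemma Wc_meas[measurable]: "(\<And>j. j < N \<Longrightarrow> B j \<in> sets S) \<Longrightarrow> Wc i N B \<in> borel_measurable M"
  unfolding Wc_def by (intro borel_measurable_prod) (auto intro!: borel_measurable_indicator measurable_compose[OF xi_meas])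

lemma Wc_bound: "0 \<le> Wc i N B \<omega>" "Wc i N B \<omega> \<le> 1"
  unfolding Wc_def by (auto intro!: prod_nonneg prod_le_1)

lemma Wc_abs: "\<bar>Wc i N B \<omega>\<bar> \<le> 1" using Wc_bound[of i N B \<omega>] by simp

lemma Wc_Suc: "Wc i (Suc N) B \<omega> = indicator (B 0) (\<xi> i \<omega>) * Wc (i+1) N (\<lambda>j. B (Suc j)) \<omega>"
  unfolding Wc_def prod.lessThan_Suc_shift by (simp add: ac_simps)

lemma W_ce:
  assumes "\<And>j. j < N \<Longrightarrow> B j \<in> sets S"
  shows "\<exists>\<psi>. \<psi> \<in> borel_measurable S \<and> (\<forall>x\<in>space S. \<bar>\<psi> x\<bar> \<le> 1) \<and>
     (AE \<omega> in M. real_cond_exp M (F i) (Wc i N B) \<omega> = \<psi> (\<xi> i \<omega>))"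
  using assms
proof (induction N arbitrary: i B)
  case 0
  interpret sigma_finite_subalgebra M "F i" by (rule sfF)
  have "Wc i 0 B = (\<lambda>_. 1)" unfolding Wc_def by auto
  moreover have "AE \<omega> in M. real_cond_exp M (F i) (\<lambda>_. 1) \<omega> = 1"
    by (rule real_cond_exp_F_meas) auto
  ultimately show ?case by (intro exI[of _ "\<lambda>_. 1"]) auto
next
  case (Suc N)
  define B' where "B' j = B (Suc j)" for j
  have B'[measurable]: "j < N \<Longrightarrow> B' j \<in> sets S" for j using Suc.prems by (simp add: B'_def)
  have B0[measurable]: "B 0 \<in> sets S" using Suc.prems by simp
  obtain \<psi> where \<psi>[measurable]: "\<psi> \<in> borel_measurable S" and b\<psi>: "\<forall>x\<in>space S. \<bar>\<psi> x\<bar> \<le> 1"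
    and ae\<psi>: "AE \<omega> in M. real_cond_exp M (F (i+1)) (Wc (i+1) N B') \<omega> = \<psi> (\<xi> (i+1) \<omega>)"
    using Suc.IH[of B' "i+1"] B' by blast
  interpret sigma_finite_subalgebra M "F i" by (rule sfF)
  have i\<psi>: "integrable \<pi> \<psi>" by (rule bdd_int_pi[OF \<psi>]) (use b\<psi> in auto)
  have iW: "integrable M (Wc (i+1) N B')" by (rule bdd_int[where c=1]) (auto simp: Wc_abs)
  have "AE \<omega> in M. real_cond_exp M (F i) (real_cond_exp M (F (i+1)) (Wc (i+1) N B')) \<omega> = real_cond_exp M (F i) (Wc (i+1) N B') \<omega>"
    by (rule real_cond_exp_nested_subalg[OF subalg_F F_mono iW]) simp
  moreover have "AE \<omega> in M. real_cond_exp M (F i) (real_cond_exp M (F (i+1)) (Wc (i+1) N B')) \<omega> = real_cond_exp M (F i) (\<lambda>\<omega>. \<psi> (\<xi> (i+1) \<omega>)) \<omega>"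
    by (rule real_cond_exp_cong) (use ae\<psi> in auto)
  moreover have "AE \<omega> in M. real_cond_exp M (F i) (\<lambda>\<omega>. \<psi> (\<xi> (i+1) \<omega>)) \<omega> = P \<psi> (\<xi> i \<omega>)"
    by (rule markov_ce(2)[OF \<psi> i\<psi>])
  moreover have "AE \<omega> in M. real_cond_exp M (F i) (\<lambda>\<omega>. indicator (B 0) (\<xi> i \<omega>) * Wc (i+1) N B' \<omega>) \<omega>
      = indicator (B 0) (\<xi> i \<omega>) * real_cond_exp M (F i) (Wc (i+1) N B') \<omega>"
  proof (rule real_cond_exp_mult)
    show "(\<lambda>\<omega>. indicator (B 0) (\<xi> i \<omega>) :: real) \<in> borel_measurable (F i)"
      by (rule measurable_compose[OF xi_F]) auto
    show "integrable M (\<lambda>\<omega>. indicator (B 0) (\<xi> i \<omega>) * Wc (i + 1) N B' \<omega>)"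
      by (rule bdd_int[where c=1]) (auto simp: Wc_abs indicator_def Wc_bound)
  qed measurable
  ultimately have "AE \<omega> in M. real_cond_exp M (F i) (Wc i (Suc N) B) \<omega> = indicator (B 0) (\<xi> i \<omega>) * P \<psi> (\<xi> i \<omega>)"
    by (auto simp: Wc_Suc[abs_def] B'_def[symmetric])
  moreover have "\<forall>x\<in>space S. \<bar>indicator (B 0) x * P \<psi> x\<bar> \<le> 1"
    using P_bound[OF \<psi>, of 1] b\<psi> by (auto simp: indicator_def)
  ultimately show ?case
    by (intro exI[of _ "\<lambda>x. indicator (B 0) x * P \<psi> x"]) (auto intro!: borel_measurable_times P_meas)
qed

lemma cyl_eq:
  fixes \<phi> :: "'s \<Rightarrow> real"
  assumes \<phi>[measurable]: "\<phi> \<in> borel_measurable S" and i\<phi>: "integrable \<pi> \<phi>"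
    and B: "\<And>j. j < N \<Longrightarrow> B j \<in> sets S"
  shows "(\<integral>\<omega>. \<phi> (\<xi> i \<omega>) * Wc (i+1) N B \<omega> \<partial>M) = (\<integral>\<omega>. P \<phi> (\<xi> (i+1) \<omega>) * Wc (i+1) N B \<omega> \<partial>M)"
proof -
  obtain \<psi> where \<psi>[measurable]: "\<psi> \<in> borel_measurable S" and b\<psi>: "\<forall>x\<in>space S. \<bar>\<psi> x\<bar> \<le> 1"
    and ae\<psi>: "AE \<omega> in M. real_cond_exp M (F (i+1)) (Wc (i+1) N B) \<omega> = \<psi> (\<xi> (i+1) \<omega>)"
    using W_ce[where N=N and B=B and i="i+1"] B by blast
  interpret sigma_finite_subalgebra M "F (i+1)" by (rule sfF)
  have P\<phi>[measurable]: "P \<phi> \<in> borel_measurable S" by (rule P_meas[OF \<phi>])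
  have iP\<phi>: "integrable \<pi> (P \<phi>)" by (rule markov_ce(1)[OF \<phi> i\<phi>])
  have Wm[measurable]: "Wc (i+1) N B \<in> borel_measurable M" using B by measurable
  have "(\<integral>\<omega>. \<phi> (\<xi> i \<omega>) * Wc (i+1) N B \<omega> \<partial>M) = (\<integral>\<omega>. \<phi> (\<xi> i \<omega>) * real_cond_exp M (F (i+1)) (Wc (i+1) N B) \<omega> \<partial>M)"
    by (rule real_cond_exp_intg(2)[symmetric])
       (auto intro!: int_bdd[where c=1] int_xi[OF i\<phi>] measurable_compose[OF xi_F \<phi>] simp: Wc_abs)
  also have "\<dots> = (\<integral>\<omega>. \<phi> (\<xi> i \<omega>) * \<psi> (\<xi> (i+1) \<omega>) \<partial>M)"
    by (rule integral_cong_AE) (use ae\<psi> in auto)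
  also have "\<dots> = (\<integral>\<omega>. P \<phi> (\<xi> (i+1) \<omega>) * \<psi> (\<xi> (i+1) \<omega>) \<partial>M)"
    by (rule pair_rev[OF \<phi> i\<phi> \<psi>]) (use b\<psi> in auto)
  also have "\<dots> = (\<integral>\<omega>. P \<phi> (\<xi> (i+1) \<omega>) * real_cond_exp M (F (i+1)) (Wc (i+1) N B) \<omega> \<partial>M)"
    by (rule integral_cong_AE) (use ae\<psi> in auto)
  also have "\<dots> = (\<integral>\<omega>. P \<phi> (\<xi> (i+1) \<omega>) * Wc (i+1) N B \<omega> \<partial>M)"
    by (rule real_cond_exp_intg(2))
       (auto intro!: int_bdd[where c=1] int_xi[OF iP\<phi>] measurable_compose[OF xi_F P\<phi>] simp: Wc_abs)
  finally show ?thesis .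
qed

end

context rmc begin

definition Cyl :: "int \<Rightarrow> 'a set set" where
  "Cyl i = {{\<omega>\<in>space M. \<forall>j<N. \<xi> (i + int j) \<omega> \<in> B j} | N B. \<forall>j<N. B j \<in> sets S}"

lemma Cyl_Pow: "Cyl i \<subseteq> Pow (space M)" unfolding Cyl_def by auto

lemma Cyl_Int_stable: "Int_stable (Cyl i)"
proof (rule Int_stableI)
  fix a b assume "a \<in> Cyl i" "b \<in> Cyl i"
  then obtain N1 B1 N2 B2 where a: "a = {\<omega>\<in>space M. \<forall>j<N1. \<xi> (i + int j) \<omega> \<in> B1 j}" "\<forall>j<N1. B1 j \<in> sets S"
    and b: "b = {\<omega>\<in>space M. \<forall>j<N2. \<xi> (i + int j) \<omega> \<in> B2 j}" "\<forall>j<N2. B2 j \<in> sets S"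
    unfolding Cyl_def by blast
  define B where "B j = (if j < N1 then B1 j else space S) \<inter> (if j < N2 then B2 j else space S)" for j
  have "\<forall>j<max N1 N2. B j \<in> sets S" using a(2) b(2) by (auto simp: B_def)
  moreover have "a \<inter> b = {\<omega>\<in>space M. \<forall>j<max N1 N2. \<xi> (i + int j) \<omega> \<in> B j}"
    unfolding a b B_def using measurable_space[OF xi_meas] by (auto simp: less_max_iff_disj)
  ultimately show "a \<inter> b \<in> Cyl i" unfolding Cyl_def by blast
qed

lemma Cyl_in_G: "A \<in> Cyl i \<Longrightarrow> A \<in> sets (G i)"
proof -
  assume "A \<in> Cyl i"
  then obtain N B where A: "A = {\<omega>\<in>space M. \<forall>j<N. \<xi> (i + int j) \<omega> \<in> B j}" and B: "\<forall>j<N. B j \<in> sets S"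
    unfolding Cyl_def by blast
  have "\<xi> (i + int j) -` B j \<inter> space M \<in> sets (G i)" if "j < N" for j
    using measurable_sets[OF xi_G[of i "i + int j"], of "B j"] B that by simp
  moreover have top: "space M \<in> sets (G i)" using sets.top[of "G i"] by simp
  ultimately have "space M \<inter> (\<Inter>j\<in>{..<N}. \<xi> (i + int j) -` B j \<inter> space M) \<in> sets (G i)"
  proof (cases "N = 0")
    case False
    then have "(\<Inter>j\<in>{..<N}. \<xi> (i + int j) -` B j \<inter> space M) \<in> sets (G i)"
      using \<open>\<And>j. j < N \<Longrightarrow> _\<close> by (intro sets.finite_INT) auto
    then show ?thesis using top by (intro sets.Int)
  qed simp
  moreover have "A = space M \<inter> (\<Inter>j\<in>{..<N}. \<xi> (i + int j) -` B j \<inter> space M)" unfolding A by auto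
  ultimately show ?thesis by simp
qed

lemma Cyl_sigma: "sigma_sets (space M) (Cyl i) = sets (G i)"
proof
  show "sigma_sets (space M) (Cyl i) \<subseteq> sets (G i)"
    using sets.sigma_sets_subset[of "Cyl i" "G i"] Cyl_in_G by auto
  show "sets (G i) \<subseteq> sigma_sets (space M) (Cyl i)"
    unfolding sets_G
  proof (rule sigma_sets_mono)
    show "{\<xi> k -` A \<inter> space M |k A. i \<le> k \<and> A \<in> sets S} \<subseteq> sigma_sets (space M) (Cyl i)"
    proof safe
      fix k A assume k: "i \<le> k" and A: "A \<in> sets S"
      define N where "N = Suc (nat (k - i))"
      define B where "B j = (if j = nat (k - i) then A else space S)" for j
      have "\<forall>j<N. B j \<in> sets S" using A by (auto simp: B_def)
      moreover have "\<xi> k -` A \<inter> space M = {\<omega>\<in>space M. \<forall>j<N. \<xi> (i + int j) \<omega> \<in> B j}"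
        using measurable_space[OF xi_meas] k by (auto simp: N_def B_def less_Suc_eq_le)
      ultimately have "\<xi> k -` A \<inter> space M \<in> Cyl i" unfolding Cyl_def by blast
      then show "\<xi> k -` A \<inter> space M \<in> sigma_sets (space M) (Cyl i)" by (rule sigma_sets.Basic)
    qed
  qed
qed

lemma Cyl_indicator:
  assumes "\<omega> \<in> space M"
  shows "indicator {\<omega>\<in>space M. \<forall>j<N. \<xi> (i + int j) \<omega> \<in> B j} \<omega> = Wc i N B \<omega>"
proof (cases "\<forall>j<N. \<xi> (i + int j) \<omega> \<in> B j")
  case True then show ?thesis using assms by (auto simp: Wc_def indicator_def intro!: prod.neutral)
next
  case False
  then obtain j where "j < N" "\<xi> (i + int j) \<omega> \<notin> B j" by blast
  then have "Wc i N B \<omega> = 0" unfolding Wc_def by (subst prod_zero_iff) (auto intro!: bexI[of _ j])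
  then show ?thesis using False by (simp add: indicator_def)
qed

lemma rev_markov:
  fixes \<phi> :: "'s \<Rightarrow> real"
  assumes \<phi>[measurable]: "\<phi> \<in> borel_measurable S" and i\<phi>: "integrable \<pi> \<phi>"
  shows "AE \<omega> in M. real_cond_exp M (G (i+1)) (\<lambda>\<omega>. \<phi> (\<xi> i \<omega>)) \<omega> = P \<phi> (\<xi> (i+1) \<omega>)"
proof -
  interpret sigma_finite_subalgebra M "G (i+1)" by (rule sfG)
  have P\<phi>[measurable]: "P \<phi> \<in> borel_measurable S" by (rule P_meas[OF \<phi>])
  have iP\<phi>: "integrable \<pi> (P \<phi>)" by (rule markov_ce(1)[OF \<phi> i\<phi>])
  have i1: "integrable M (\<lambda>\<omega>. \<phi> (\<xi> i \<omega>))" by (rule int_xi[OF i\<phi> \<phi>])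
  have i2: "integrable M (\<lambda>\<omega>. P \<phi> (\<xi> (i+1) \<omega>))" by (rule int_xi[OF iP\<phi> P\<phi>])
  show ?thesis
  proof (rule real_cond_exp_charact[OF _ i1 i2])
    show "(\<lambda>\<omega>. P \<phi> (\<xi> (i+1) \<omega>)) \<in> borel_measurable (G (i+1))"
      by (rule measurable_compose[OF xi_G P\<phi>]) simp
    fix A assume "A \<in> sets (G (i+1))"
    then have "A \<in> sigma_sets (space M) (Cyl (i+1))" by (simp add: Cyl_sigma)
    then show "(\<integral>\<omega>\<in>A. \<phi> (\<xi> i \<omega>) \<partial>M) = (\<integral>\<omega>\<in>A. P \<phi> (\<xi> (i+1) \<omega>) \<partial>M)"
    proof (induction rule: sigma_sets_induct_disjoint[OF Cyl_Int_stable Cyl_Pow, consumes 1, case_names basic empty compl union])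
      case (basic A)
      then obtain N B where A: "A = {\<omega>\<in>space M. \<forall>j<N. \<xi> (i + 1 + int j) \<omega> \<in> B j}" and B: "\<forall>j<N. B j \<in> sets S"
        unfolding Cyl_def by blast
      have "(\<integral>\<omega>\<in>A. \<phi> (\<xi> i \<omega>) \<partial>M) = (\<integral>\<omega>. \<phi> (\<xi> i \<omega>) * Wc (i+1) N B \<omega> \<partial>M)"
        unfolding set_lebesgue_integral_def A by (intro Bochner_Integration.integral_cong) (auto simp: Cyl_indicator)
      also have "\<dots> = (\<integral>\<omega>. P \<phi> (\<xi> (i+1) \<omega>) * Wc (i+1) N B \<omega> \<partial>M)"
        by (rule cyl_eq[OF \<phi> i\<phi>]) (use B in auto)
      also have "\<dots> = (\<integral>\<omega>\<in>A. P \<phi> (\<xi> (i+1) \<omega>) \<partial>M)"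
        unfolding set_lebesgue_integral_def A by (intro Bochner_Integration.integral_cong) (auto simp: Cyl_indicator)
      finally show ?case .
    next
      case empty then show ?case by (simp add: set_lebesgue_integral_def)
    next
      case (compl A)
      have Am: "A \<in> sets M" using compl(1) Cyl_sigma[of "i+1"] subalg_G[of "i+1"] by (auto simp: subalgebra_def)
      then have AM: "A \<subseteq> space M" using sets.sets_into_space by auto
      have top: "space M \<in> Cyl (i+1)" unfolding Cyl_def by (intro CollectI exI[of _ 0]) auto
      have eqt: "(\<integral>\<omega>\<in>space M. \<phi> (\<xi> i \<omega>) \<partial>M) = (\<integral>\<omega>\<in>space M. P \<phi> (\<xi> (i+1) \<omega>) \<partial>M)"
      proof -
        have "(\<integral>\<omega>\<in>space M. \<phi> (\<xi> i \<omega>) \<partial>M) = (\<integral>\<omega>. \<phi> (\<xi> i \<omega>) * Wc (i+1) 0 (\<lambda>_. {}) \<omega> \<partial>M)"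
          unfolding set_lebesgue_integral_def by (intro Bochner_Integration.integral_cong) (auto simp: Wc_def)
        also have "\<dots> = (\<integral>\<omega>. P \<phi> (\<xi> (i+1) \<omega>) * Wc (i+1) 0 (\<lambda>_. {}) \<omega> \<partial>M)"
          by (rule cyl_eq[OF \<phi> i\<phi>]) auto
        also have "\<dots> = (\<integral>\<omega>\<in>space M. P \<phi> (\<xi> (i+1) \<omega>) \<partial>M)"
          unfolding set_lebesgue_integral_def by (intro Bochner_Integration.integral_cong) (auto simp: Wc_def)
        finally show ?thesis .
      qed
      have d: "(\<integral>\<omega>\<in>space M - A. f \<omega> \<partial>M) = (\<integral>\<omega>\<in>space M. f \<omega> \<partial>M) - (\<integral>\<omega>\<in>A. f \<omega> \<partial>M)"
        if "integrable M f" for f :: "'a \<Rightarrow> real"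
      proof -
        have "(\<integral>\<omega>\<in>space M - A. f \<omega> \<partial>M) = (\<integral>\<omega>. indicator (space M) \<omega> * f \<omega> - indicator A \<omega> * f \<omega> \<partial>M)"
          unfolding set_lebesgue_integral_def using AM
          by (intro Bochner_Integration.integral_cong) (auto simp: indicator_def)
        also have "\<dots> = (\<integral>\<omega>. indicator (space M) \<omega> * f \<omega> \<partial>M) - (\<integral>\<omega>. indicator A \<omega> * f \<omega> \<partial>M)"
          by (rule Bochner_Integration.integral_diff)
             (use integrable_mult_indicator[OF Am that] integrable_mult_indicator[OF sets.top that] in auto)
        finally show ?thesis unfolding set_lebesgue_integral_def by simp
      qed
      show ?case using d[OF i1] d[OF i2] eqt compl(2) by simp
    next
      case (union A)
      have Am: "A n \<in> sets M" for n using union(2) Cyl_sigma[of "i+1"] subalg_G[of "i+1"] by (auto simp: subalgebra_def)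
      have dj: "n \<noteq> m \<Longrightarrow> A n \<inter> A m = {}" for n m using union(1) by (auto simp: disjoint_family_on_def)
      have UAm: "(\<Union>n. A n) \<in> sets M" using Am by auto
      have ii1: "set_integrable M (\<Union>n. A n) (\<lambda>\<omega>. \<phi> (\<xi> i \<omega>))"
        unfolding set_integrable_def by (rule integrable_mult_indicator[OF UAm i1])
      have ii2: "set_integrable M (\<Union>n. A n) (\<lambda>\<omega>. P \<phi> (\<xi> (i+1) \<omega>))"
        unfolding set_integrable_def by (rule integrable_mult_indicator[OF UAm i2])
      have "(\<integral>\<omega>\<in>(\<Union>n. A n). \<phi> (\<xi> i \<omega>) \<partial>M) = (\<Sum>n. (\<integral>\<omega>\<in>A n. \<phi> (\<xi> i \<omega>) \<partial>M))"
        using lebesgue_integral_countable_add[OF Am _ ii1] dj by (metis (no_types, lifting))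
      also have "\<dots> = (\<Sum>n. (\<integral>\<omega>\<in>A n. P \<phi> (\<xi> (i+1) \<omega>) \<partial>M))" using union(3) by simp
      also have "\<dots> = (\<integral>\<omega>\<in>(\<Union>n. A n). P \<phi> (\<xi> (i+1) \<omega>) \<partial>M)"
        using lebesgue_integral_countable_add[OF Am _ ii2] dj by (metis (no_types, lifting))
      finally show ?case .
    qed
  qed
qed

end

lemma sum_int_interval_shift:
  fixes g :: "int \<Rightarrow> real"
  shows "(\<Sum>j\<in>{k..k + int i}. g j) = (\<Sum>m\<le>i. g (k + int m))"
proof -
  have "{k..k + int i} = (\<lambda>m. k + int m) ` {..i}"
  proof
    show "{k..k + int i} \<subseteq> (\<lambda>m. k + int m) ` {..i}"
    proof
      fix j assume "j \<in> {k..k + int i}"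
      then have "j = k + int (nat (j - k))" "nat (j - k) \<le> i" by auto
      then show "j \<in> (\<lambda>m. k + int m) ` {..i}" by blast
    qed
  qed auto
  moreover have "inj_on (\<lambda>m. k + int m) {..i}" by (auto simp: inj_on_def)
  ultimately show ?thesis by (simp add: sum.reindex)
qed

lemma sum_1_int_nat:
  fixes g :: "int \<Rightarrow> real"
  shows "(\<Sum>j\<in>{1..int k}. g j) = (\<Sum>i\<in>{1..k}. g (int i))"
proof -
  have "{1..int k} = int ` {1..k}"
  proof
    show "{1..int k} \<subseteq> int ` {1..k}"
    proof
      fix j assume "j \<in> {1..int k}"
      then have "j = int (nat j)" "nat j \<in> {1..k}" by auto
      then show "j \<in> int ` {1..k}" by blast
    qed
  qed auto
  then show ?thesis by (simp add: sum.reindex)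
qed

lemma Sm_diff:
  fixes g :: "int \<Rightarrow> real"
  assumes "0 \<le> j"
  shows "(\<Sum>l\<in>{1..j + int i}. g l) - (\<Sum>l\<in>{1..j}. g l) = (\<Sum>m\<in>{1..i}. g (j + int m))"
proof (induction i)
  case 0 then show ?case by simp
next
  case (Suc i)
  have "{1..j + int (Suc i)} = insert (j + int i + 1) {1..j + int i}" using assms by auto
  then have "(\<Sum>l\<in>{1..j + int (Suc i)}. g l) = g (j + int i + 1) + (\<Sum>l\<in>{1..j + int i}. g l)" by simp
  moreover have "(\<Sum>m\<in>{1..Suc i}. g (j + int m)) = g (j + int i + 1) + (\<Sum>m\<in>{1..i}. g (j + int m))"
    by (simp add: algebra_simps)
  ultimately show ?case using Suc by simp
qed

lemma dec_alg:
  fixes a b u c :: "nat \<Rightarrow> real"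
  assumes "\<And>i. a i = b i + u i - c i"
  shows "(\<Sum>i\<in>{1..k}. a i - b (i - 1)) + (\<Sum>i<k. a i - b (Suc i)) + (u k - u 0)
           + (\<Sum>i\<in>{1..k}. c (i - 1) + c i) = 2 * (\<Sum>i\<in>{1..k}. u i)"
proof (induction k)
  case 0 then show ?case by simp
next
  case (Suc k)
  then show ?case using assms[of k] assms[of "Suc k"] by (simp add: algebra_simps)
qed

locale rmcf = rmc +
  fixes f and n :: nat
  assumes f_meas[measurable]: "(f :: _ \<Rightarrow> real) \<in> borel_measurable S" and f_int: "integrable \<pi> f" and n_pos: "1 \<le> n"
begin

definition "fm m = (P ^^ m) f"
definition "hh x = (1 / real n) * (\<Sum>i<n. \<Sum>m\<le>i. fm m x)"
definition "hh' x = (1 / real n) * (\<Sum>i<n. \<Sum>m\<le>i. fm (Suc m) x)"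
definition "Gs i x = (\<Sum>m\<in>{1..i}. fm m x)"
definition "th k = (\<lambda>\<omega>. (1 / real n) * (\<Sum>i<n. real_cond_exp M (F k) (\<lambda>\<omega>'. \<Sum>j\<in>{k..k + int i}. f (\<xi> j \<omega>')) \<omega>))"

lemma fm_props: "fm m \<in> borel_measurable S" "integrable \<pi> (fm m)"
  "AE \<omega> in M. real_cond_exp M (F k) (\<lambda>\<omega>. f (\<xi> (k + int m) \<omega>)) \<omega> = fm m (\<xi> k \<omega>)"
  using Pn[OF f_meas f_int, of m] unfolding fm_def by auto

lemma fm_meas[measurable]: "fm m \<in> borel_measurable S" by (rule fm_props)
lemma fm_0: "fm 0 = f" by (simp add: fm_def)
lemma P_fm: "P (fm m) = fm (Suc m)" by (simp add: fm_def)

lemma hh_meas[measurable]: "hh \<in> borel_measurable S" unfolding hh_def by measurable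
lemma hh'_meas[measurable]: "hh' \<in> borel_measurable S" unfolding hh'_def by measurable
lemma Gs_meas[measurable]: "Gs i \<in> borel_measurable S" unfolding Gs_def by measurable

lemma hh_int: "integrable \<pi> hh" unfolding hh_def using fm_props(2) by auto
lemma hh'_int: "integrable \<pi> hh'" unfolding hh'_def using fm_props(2) by auto
lemma Gs_int: "integrable \<pi> (Gs i)" unfolding Gs_def using fm_props(2) by auto

lemma Xint: "integrable M (\<lambda>\<omega>. f (\<xi> j \<omega>))" by (rule int_xi[OF f_int f_meas])

lemma ce_block:
  "AE \<omega> in M. real_cond_exp M (F k) (\<lambda>\<omega>'. \<Sum>j\<in>{k..k + int i}. f (\<xi> j \<omega>')) \<omega> = (\<Sum>m\<le>i. fm m (\<xi> k \<omega>))"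
proof -
  interpret sigma_finite_subalgebra M "F k" by (rule sfF)
  have "AE \<omega> in M. real_cond_exp M (F k) (\<lambda>\<omega>'. \<Sum>j\<in>{k..k + int i}. f (\<xi> j \<omega>')) \<omega>
      = (\<Sum>j\<in>{k..k + int i}. real_cond_exp M (F k) (\<lambda>\<omega>'. f (\<xi> j \<omega>')) \<omega>)"
    by (rule real_cond_exp_sum) (rule Xint)
  moreover have "AE \<omega> in M. \<forall>m\<in>{..i}. real_cond_exp M (F k) (\<lambda>\<omega>. f (\<xi> (k + int m) \<omega>)) \<omega> = fm m (\<xi> k \<omega>)"
    by (rule AE_finite_allI) (auto intro: fm_props(3))
  ultimately show ?thesis
    by eventually_elim (simp add: sum_int_interval_shift)
qed

lemma th_rep: "AE \<omega> in M. th k \<omega> = hh (\<xi> k \<omega>)"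
proof -
  have "AE \<omega> in M. \<forall>i\<in>{..<n}. real_cond_exp M (F k) (\<lambda>\<omega>'. \<Sum>j\<in>{k..k + int i}. f (\<xi> j \<omega>')) \<omega> = (\<Sum>m\<le>i. fm m (\<xi> k \<omega>))"
    by (rule AE_finite_allI) (auto intro: ce_block)
  then show ?thesis by eventually_elim (simp add: th_def hh_def)
qed

lemma th_meas_F: "th k \<in> borel_measurable (F k)" unfolding th_def by measurable
lemma th_meas[measurable]: "th k \<in> borel_measurable M"
  using measurable_from_subalg[OF subalg_F th_meas_F] .

lemma th_int: "integrable M (th k)"
proof -
  interpret sigma_finite_subalgebra M "F k" by (rule sfF)
  show ?thesis unfolding th_def
    by (intro integrable_mult_right Bochner_Integration.integrable_sum real_cond_exp_int(1)
        Bochner_Integration.integrable_sum Xint)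
qed

lemma hh'_ce: "AE \<omega> in M. real_cond_exp M (F j) (\<lambda>\<omega>. hh (\<xi> (j+1) \<omega>)) \<omega> = hh' (\<xi> j \<omega>)"
proof -
  interpret sigma_finite_subalgebra M "F j" by (rule sfF)
  have i: "integrable M (\<lambda>\<omega>. fm m (\<xi> (j+1) \<omega>))" for m by (rule int_xi[OF fm_props(2) fm_meas])
  have i2: "integrable M (\<lambda>\<omega>. \<Sum>m\<le>l. fm m (\<xi> (j+1) \<omega>))" for l using i by auto
  have i3: "integrable M (\<lambda>\<omega>. \<Sum>l<n. \<Sum>m\<le>l. fm m (\<xi> (j+1) \<omega>))" using i2 by auto
  have "AE \<omega> in M. real_cond_exp M (F j) (\<lambda>\<omega>. hh (\<xi> (j+1) \<omega>)) \<omega>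
      = (1 / real n) * real_cond_exp M (F j) (\<lambda>\<omega>. \<Sum>l<n. \<Sum>m\<le>l. fm m (\<xi> (j+1) \<omega>)) \<omega>"
    unfolding hh_def by (rule real_cond_exp_cmult[OF i3])
  moreover have "AE \<omega> in M. real_cond_exp M (F j) (\<lambda>\<omega>. \<Sum>l<n. \<Sum>m\<le>l. fm m (\<xi> (j+1) \<omega>)) \<omega>
      = (\<Sum>l<n. real_cond_exp M (F j) (\<lambda>\<omega>. \<Sum>m\<le>l. fm m (\<xi> (j+1) \<omega>)) \<omega>)"
    by (rule real_cond_exp_sum) (rule i2)
  moreover have "AE \<omega> in M. \<forall>l\<in>{..<n}. real_cond_exp M (F j) (\<lambda>\<omega>. \<Sum>m\<le>l. fm m (\<xi> (j+1) \<omega>)) \<omega>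
      = (\<Sum>m\<le>l. real_cond_exp M (F j) (\<lambda>\<omega>. fm m (\<xi> (j+1) \<omega>)) \<omega>)"
    by (rule AE_finite_allI) (auto intro!: real_cond_exp_sum i)
  moreover have "AE \<omega> in M. \<forall>m\<in>{..n}. real_cond_exp M (F j) (\<lambda>\<omega>. fm m (\<xi> (j+1) \<omega>)) \<omega> = fm (Suc m) (\<xi> j \<omega>)"
    by (rule AE_finite_allI) (use markov_ce(2)[OF fm_meas fm_props(2)] in \<open>auto simp: P_fm\<close>)
  ultimately show ?thesis
  proof eventually_elim
    case (elim \<omega>)
    have "(\<Sum>l<n. \<Sum>m\<le>l. real_cond_exp M (F j) (\<lambda>\<omega>. fm m (\<xi> (j+1) \<omega>)) \<omega>) = (\<Sum>l<n. \<Sum>m\<le>l. fm (Suc m) (\<xi> j \<omega>))"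
      using elim(4) by (intro sum.cong refl) auto
    then show ?case using elim(1-3) by (simp add: hh'_def)
  qed
qed

lemma Eth: "AE \<omega> in M. real_cond_exp M (F (k - 1)) (th k) \<omega> = hh' (\<xi> (k - 1) \<omega>)"
proof -
  interpret sigma_finite_subalgebra M "F (k-1)" by (rule sfF)
  have "AE \<omega> in M. real_cond_exp M (F (k - 1)) (th k) \<omega> = real_cond_exp M (F (k - 1)) (\<lambda>\<omega>. hh (\<xi> (k - 1 + 1) \<omega>)) \<omega>"
    by (rule real_cond_exp_cong) (use th_rep[of k] in auto)
  then show ?thesis using hh'_ce[of "k - 1"] by auto
qed

lemma Gth: "AE \<omega> in M. real_cond_exp M (G (k + 1)) (th k) \<omega> = hh' (\<xi> (k + 1) \<omega>)"
proof -
  interpret G: sigma_finite_subalgebra M "G (k+1)" by (rule sfG)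
  have "AE \<omega> in M. real_cond_exp M (G (k + 1)) (th k) \<omega> = real_cond_exp M (G (k + 1)) (\<lambda>\<omega>. hh (\<xi> k \<omega>)) \<omega>"
    by (rule G.real_cond_exp_cong) (use th_rep[of k] in auto)
  moreover have "AE \<omega> in M. real_cond_exp M (G (k + 1)) (\<lambda>\<omega>. hh (\<xi> k \<omega>)) \<omega> = P hh (\<xi> (k+1) \<omega>)"
    by (rule rev_markov[OF hh_meas hh_int])
  moreover have "AE \<omega> in M. real_cond_exp M (F (k+1)) (\<lambda>\<omega>. hh (\<xi> (k+1+1) \<omega>)) \<omega> = P hh (\<xi> (k+1) \<omega>)"
    by (rule markov_ce(2)[OF hh_meas hh_int])
  moreover note hh'_ce[of "k+1"]
  ultimately show ?thesis by auto
qed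

lemma Sm_ce:
  assumes "0 \<le> j"
  shows "AE \<omega> in M. real_cond_exp M (F j) (\<lambda>\<omega>. (\<Sum>l\<in>{1..j + int i}. f (\<xi> l \<omega>)) - (\<Sum>l\<in>{1..j}. f (\<xi> l \<omega>))) \<omega>
      = Gs i (\<xi> j \<omega>)"
proof -
  interpret sigma_finite_subalgebra M "F j" by (rule sfF)
  have "AE \<omega> in M. real_cond_exp M (F j) (\<lambda>\<omega>. (\<Sum>l\<in>{1..j + int i}. f (\<xi> l \<omega>)) - (\<Sum>l\<in>{1..j}. f (\<xi> l \<omega>))) \<omega>
      = real_cond_exp M (F j) (\<lambda>\<omega>. \<Sum>m\<in>{1..i}. f (\<xi> (j + int m) \<omega>)) \<omega>"
    by (rule real_cond_exp_cong) (auto simp: Sm_diff[OF assms])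
  moreover have "AE \<omega> in M. real_cond_exp M (F j) (\<lambda>\<omega>. \<Sum>m\<in>{1..i}. f (\<xi> (j + int m) \<omega>)) \<omega>
      = (\<Sum>m\<in>{1..i}. real_cond_exp M (F j) (\<lambda>\<omega>. f (\<xi> (j + int m) \<omega>)) \<omega>)"
    by (rule real_cond_exp_sum) (rule Xint)
  moreover have "AE \<omega> in M. \<forall>m\<in>{1..i}. real_cond_exp M (F j) (\<lambda>\<omega>. f (\<xi> (j + int m) \<omega>)) \<omega> = fm m (\<xi> j \<omega>)"
    by (rule AE_finite_allI) (auto intro: fm_props(3))
  ultimately show ?thesis by eventually_elim (simp add: Gs_def)
qed

lemma hh_diff: "hh x = hh' x + f x - Gs n x / real n"
proof -
  have "(\<Sum>m\<le>i. fm m x) = (\<Sum>m\<le>i. fm (Suc m) x) + f x - fm (Suc i) x" for i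
    using sum_telescope[of "\<lambda>m. fm m x" i] by (simp add: fm_0 sum_subtractf)
  then have "(\<Sum>i<n. \<Sum>m\<le>i. fm m x) = (\<Sum>i<n. \<Sum>m\<le>i. fm (Suc m) x) + real n * f x - (\<Sum>i<n. fm (Suc i) x)"
    by (simp add: sum.distrib sum_subtractf)
  moreover have "(\<Sum>i<n. fm (Suc i) x) = Gs n x" unfolding Gs_def by (simp add: sum.atLeast1_atMost_eq)
  ultimately have e: "(\<Sum>i<n. \<Sum>m\<le>i. fm m x) = (\<Sum>i<n. \<Sum>m\<le>i. fm (Suc m) x) + real n * f x - Gs n x" by simp
  show ?thesis using n_pos unfolding hh_def hh'_def e by (simp add: field_simps)
qed

lemma hh'_Gs: "hh' x = (1 / real n) * (\<Sum>i<n. Gs (Suc i) x)"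
proof -
  have "Gs (Suc i) x = (\<Sum>m\<le>i. fm (Suc m) x)" for i
    unfolding Gs_def One_nat_def sum.atLeast1_atMost_eq lessThan_Suc_atMost ..
  then show ?thesis unfolding hh'_def by simp
qed

end

context rmc begin

lemma pi_prob: "prob_space \<pi>" using prob_space_distr[OF xi_meas, of 0] distr_xi[of 0] by simp

lemma Lp_xi:
  fixes w :: "'s \<Rightarrow> real"
  assumes [measurable]: "w \<in> borel_measurable S"
  shows "Lp_norm M p (\<lambda>\<omega>. w (\<xi> j \<omega>)) = Lp_norm M p (\<lambda>\<omega>. w (\<xi> 0 \<omega>))"
  unfolding Lp_norm_def using integral_xi[of "\<lambda>x. \<bar>w x\<bar> powr p"] by simp

lemma Lpi_xi:
  fixes w :: "'s \<Rightarrow> real"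
  assumes [measurable]: "w \<in> borel_measurable S"
  shows "Lpi M p (\<lambda>\<omega>. w (\<xi> j \<omega>)) \<longleftrightarrow> integrable \<pi> (\<lambda>x. \<bar>w x\<bar> powr p)"
  unfolding Lpi_def using int_xi_iff[of "\<lambda>x. \<bar>w x\<bar> powr p" j] by simp

lemma Lpi_cong_AE:
  assumes "AE \<omega> in M. u \<omega> = v \<omega>" "v \<in> borel_measurable M" "Lpi M p u"
  shows "Lpi M p v"
  using assms unfolding Lpi_def
  by (auto intro: integrable_cong_AE[THEN iffD1, rotated 3] elim!: AE_mp)

lemma ce_Lpi:
  assumes p: "1 \<le> p" and Y: "integrable M Y" "Lpi M p Y"
  shows "Lpi M p (real_cond_exp M (F k) Y)"
proof -
  interpret sigma_finite_subalgebra M "F k" by (rule sfF)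
  have q: "integrable M (\<lambda>\<omega>. \<bar>Y \<omega>\<bar> powr p)" using Y by (simp add: Lpi_def)
  have J: "AE \<omega> in M. \<bar>real_cond_exp M (F k) Y \<omega>\<bar> powr p \<le> real_cond_exp M (F k) (\<lambda>\<omega>. \<bar>Y \<omega>\<bar> powr p) \<omega>"
    by (rule real_cond_exp_jensens_inequality(2)[OF Y(1) _ _ q abs_powr_convex[OF p]]) auto
  show ?thesis unfolding Lpi_def
  proof
    show "real_cond_exp M (F k) Y \<in> borel_measurable M" by simp
    show "integrable M (\<lambda>\<omega>. \<bar>real_cond_exp M (F k) Y \<omega>\<bar> powr p)"
    proof (rule Bochner_Integration.integrable_bound[OF real_cond_exp_int(1)[OF q]])
      show "(\<lambda>\<omega>. \<bar>real_cond_exp M (F k) Y \<omega>\<bar> powr p) \<in> borel_measurable M" by measurable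
      show "AE \<omega> in M. norm (\<bar>real_cond_exp M (F k) Y \<omega>\<bar> powr p) \<le> norm (real_cond_exp M (F k) (\<lambda>\<omega>. \<bar>Y \<omega>\<bar> powr p) \<omega>)"
        using J by eventually_elim auto
    qed
  qed
qed

end

context rmcf begin

context
  fixes p :: real
  assumes p: "1 \<le> p" and fp: "integrable \<pi> (\<lambda>x. \<bar>f x\<bar> powr p)"
begin

lemma Lpi_f: "Lpi M p (\<lambda>\<omega>. f (\<xi> j \<omega>))" using Lpi_xi[OF f_meas] fp by simp

lemma Lpi_Sm: "Lpi M p (\<lambda>\<omega>. \<Sum>l\<in>I. f (\<xi> l \<omega>))"
  using p by (intro Lpi_sum Lpi_f) auto

lemma Lpi_Gs: "Lpi M p (\<lambda>\<omega>. Gs i (\<xi> j \<omega>))"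
proof -
  have "Lpi M p (real_cond_exp M (F 0) (\<lambda>\<omega>. (\<Sum>l\<in>{1..0 + int i}. f (\<xi> l \<omega>)) - (\<Sum>l\<in>{1..0}. f (\<xi> l \<omega>))))"
    by (rule ce_Lpi[OF p]) (use Xint Lpi_Sm in auto)
  then have "Lpi M p (\<lambda>\<omega>. Gs i (\<xi> 0 \<omega>))"
    by (rule Lpi_cong_AE[rotated 2]) (use Sm_ce[of 0 i] in auto)
  then show ?thesis using Lpi_xi[OF Gs_meas] by blast
qed

lemma Lpi_hh': "Lpi M p (\<lambda>\<omega>. hh' (\<xi> j \<omega>))"
  unfolding hh'_Gs using p by (intro Lpi_cmult Lpi_sum Lpi_Gs) auto

end
end

context rmcf begin

definition "Smf k = (\<lambda>\<omega>. \<Sum>i\<in>{1..k}. f (\<xi> i \<omega>))"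
definition "Dd k = (\<lambda>\<omega>. th k \<omega> - real_cond_exp M (F (k - 1)) (th k) \<omega>)"
definition "Dtd k = (\<lambda>\<omega>. th k \<omega> - real_cond_exp M (G (k + 1)) (th k) \<omega>)"
definition "Mnd k = (\<lambda>\<omega>. \<Sum>i\<in>{1..k}. Dd (int i) \<omega>)"
definition "Mtd k = (\<lambda>\<omega>. \<Sum>i<k. Dtd (int i) \<omega>)"
definition "Rd k = (\<lambda>\<omega>. (1 / real n) * (\<Sum>i\<in>{1..k}.
                   real_cond_exp M (F (int i - 1)) (\<lambda>\<omega>'. Smf (int n + int i - 1) \<omega>' - Smf (int i - 1) \<omega>') \<omega>
                 + real_cond_exp M (F (int i)) (\<lambda>\<omega>'. Smf (int n + int i) \<omega>' - Smf (int i) \<omega>') \<omega>))"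

lemma part1: "Dd k \<in> borel_measurable (F k) \<and> integrable M (Dd k) \<and>
          (AE \<omega> in M. real_cond_exp M (F (k - 1)) (Dd k) \<omega> = 0)"
proof (intro conjI)
  interpret sigma_finite_subalgebra M "F (k-1)" by (rule sfF)
  have m1: "real_cond_exp M (F (k - 1)) (th k) \<in> borel_measurable (F k)"
    by (rule measurable_from_subalg[OF F_mono[of "k-1" k]]) simp_all
  show "Dd k \<in> borel_measurable (F k)" unfolding Dd_def using th_meas_F m1 by measurable
  have i1: "integrable M (real_cond_exp M (F (k - 1)) (th k))" by (rule real_cond_exp_int(1)[OF th_int])
  show "integrable M (Dd k)" unfolding Dd_def using th_int i1 by auto
  have "AE \<omega> in M. real_cond_exp M (F (k - 1)) (Dd k) \<omega>
     = real_cond_exp M (F (k - 1)) (th k) \<omega> - real_cond_exp M (F (k - 1)) (real_cond_exp M (F (k - 1)) (th k)) \<omega>"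
    unfolding Dd_def by (rule real_cond_exp_diff[OF th_int i1])
  moreover have "AE \<omega> in M. real_cond_exp M (F (k - 1)) (real_cond_exp M (F (k - 1)) (th k)) \<omega> = real_cond_exp M (F (k - 1)) (th k) \<omega>"
    by (rule real_cond_exp_F_meas[OF i1]) simp
  ultimately show "AE \<omega> in M. real_cond_exp M (F (k - 1)) (Dd k) \<omega> = 0" by auto
qed

lemma part2: "(\<exists>g\<in>borel_measurable (G k). AE \<omega> in M. Dtd k \<omega> = g \<omega>) \<and> integrable M (Dtd k) \<and>
          (AE \<omega> in M. real_cond_exp M (G (k + 1)) (Dtd k) \<omega> = 0)"
proof (intro conjI)
  interpret sigma_finite_subalgebra M "G (k+1)" by (rule sfG)
  have m1: "real_cond_exp M (G (k + 1)) (th k) \<in> borel_measurable (G k)"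
    by (rule measurable_from_subalg[OF G_mono[of k "k+1"]]) simp_all
  have m2: "(\<lambda>\<omega>. hh (\<xi> k \<omega>)) \<in> borel_measurable (G k)"
    by (rule measurable_compose[OF xi_G hh_meas]) simp
  show "\<exists>g\<in>borel_measurable (G k). AE \<omega> in M. Dtd k \<omega> = g \<omega>"
  proof (intro bexI)
    show "AE \<omega> in M. Dtd k \<omega> = hh (\<xi> k \<omega>) - real_cond_exp M (G (k + 1)) (th k) \<omega>"
      using th_rep[of k] by eventually_elim (simp add: Dtd_def)
    show "(\<lambda>\<omega>. hh (\<xi> k \<omega>) - real_cond_exp M (G (k + 1)) (th k) \<omega>) \<in> borel_measurable (G k)"
      using m1 m2 by measurable
  qed
  have i1: "integrable M (real_cond_exp M (G (k + 1)) (th k))" by (rule real_cond_exp_int(1)[OF th_int])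
  show "integrable M (Dtd k)" unfolding Dtd_def using th_int i1 by auto
  have "AE \<omega> in M. real_cond_exp M (G (k + 1)) (Dtd k) \<omega>
     = real_cond_exp M (G (k + 1)) (th k) \<omega> - real_cond_exp M (G (k + 1)) (real_cond_exp M (G (k + 1)) (th k)) \<omega>"
    unfolding Dtd_def by (rule real_cond_exp_diff[OF th_int i1])
  moreover have "AE \<omega> in M. real_cond_exp M (G (k + 1)) (real_cond_exp M (G (k + 1)) (th k)) \<omega> = real_cond_exp M (G (k + 1)) (th k) \<omega>"
    by (rule real_cond_exp_F_meas[OF i1]) simp
  ultimately show "AE \<omega> in M. real_cond_exp M (G (k + 1)) (Dtd k) \<omega> = 0" by auto
qed

lemma Sm_ce1:
  assumes "0 \<le> j"
  shows "AE \<omega> in M. real_cond_exp M (F j) (\<lambda>\<omega>'. Smf (int n + j) \<omega>' - Smf j \<omega>') \<omega> = Gs n (\<xi> j \<omega>)"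
  using Sm_ce[OF assms, of n] by (simp add: Smf_def add.commute)

lemma Sm_ce0: "AE \<omega> in M. real_cond_exp M (F 0) (Smf (int i)) \<omega> = Gs i (\<xi> 0 \<omega>)"
  using Sm_ce[of 0 i] by (simp add: Smf_def[abs_def])

lemma rep_all: "AE \<omega> in M.
   (\<forall>i\<in>{..K}. Dd (int i) \<omega> = hh (\<xi> (int i) \<omega>) - hh' (\<xi> (int i - 1) \<omega>)) \<and>
   (\<forall>i\<in>{..K}. Dtd (int i) \<omega> = hh (\<xi> (int i) \<omega>) - hh' (\<xi> (int i + 1) \<omega>)) \<and>
   (\<forall>i\<in>{..K}. real_cond_exp M (F (int i)) (\<lambda>\<omega>'. Smf (int n + int i) \<omega>' - Smf (int i) \<omega>') \<omega> = Gs n (\<xi> (int i) \<omega>)) \<and>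
   (\<forall>i\<in>{1..K}. real_cond_exp M (F (int i - 1)) (\<lambda>\<omega>'. Smf (int n + int i - 1) \<omega>' - Smf (int i - 1) \<omega>') \<omega> = Gs n (\<xi> (int i - 1) \<omega>))"
proof -
  have a1: "AE \<omega> in M. \<forall>i\<in>{..K}. th (int i) \<omega> = hh (\<xi> (int i) \<omega>)"
    by (rule AE_finite_allI) (auto intro: th_rep)
  have a2: "AE \<omega> in M. \<forall>i\<in>{..K}. real_cond_exp M (F (int i - 1)) (th (int i)) \<omega> = hh' (\<xi> (int i - 1) \<omega>)"
    by (rule AE_finite_allI) (auto intro: Eth)
  have a3: "AE \<omega> in M. \<forall>i\<in>{..K}. real_cond_exp M (G (int i + 1)) (th (int i)) \<omega> = hh' (\<xi> (int i + 1) \<omega>)"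
    by (rule AE_finite_allI) (auto intro: Gth)
  have a4: "AE \<omega> in M. \<forall>i\<in>{..K}. real_cond_exp M (F (int i)) (\<lambda>\<omega>'. Smf (int n + int i) \<omega>' - Smf (int i) \<omega>') \<omega> = Gs n (\<xi> (int i) \<omega>)"
    by (rule AE_finite_allI) (auto intro: Sm_ce1)
  have a5: "AE \<omega> in M. \<forall>i\<in>{1..K}. real_cond_exp M (F (int i - 1)) (\<lambda>\<omega>'. Smf (int n + int i - 1) \<omega>' - Smf (int i - 1) \<omega>') \<omega> = Gs n (\<xi> (int i - 1) \<omega>)"
  proof (rule AE_finite_allI)
    fix i assume "i \<in> {1..K}"
    then have "0 \<le> int i - 1" by auto
    from Sm_ce1[OF this] show "AE \<omega> in M. real_cond_exp M (F (int i - 1)) (\<lambda>\<omega>'. Smf (int n + int i - 1) \<omega>' - Smf (int i - 1) \<omega>') \<omega> = Gs n (\<xi> (int i - 1) \<omega>)"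
      by (simp add: add_diff_eq)
  qed simp
  show ?thesis using a1 a2 a3 a4 a5 by eventually_elim (simp add: Dd_def Dtd_def)
qed

end

context rmcf begin

lemma part3:
  assumes "1 \<le> k"
  shows "AE \<omega> in M. Smf (int k) \<omega> = (1 / 2) * ((f (\<xi> (int k) \<omega>) - f (\<xi> 0 \<omega>)) + Mnd k \<omega> + Mtd k \<omega> + Rd k \<omega>)"
  using rep_all[of k]
proof eventually_elim
  case (elim \<omega>)
  note r = elim[THEN conjunct1] elim[THEN conjunct2, THEN conjunct1]
    elim[THEN conjunct2, THEN conjunct2, THEN conjunct1] elim[THEN conjunct2, THEN conjunct2, THEN conjunct2]
  define a where "a i = hh (\<xi> (int i) \<omega>)" for i
  define b where "b i = hh' (\<xi> (int i) \<omega>)" for i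
  define u where "u i = f (\<xi> (int i) \<omega>)" for i
  define c where "c i = Gs n (\<xi> (int i) \<omega>) / real n" for i
  have abuc: "a i = b i + u i - c i" for i unfolding a_def b_def u_def c_def by (rule hh_diff)
  have eM: "Mnd k \<omega> = (\<Sum>i\<in>{1..k}. a i - b (i - 1))"
    unfolding Mnd_def
  proof (intro sum.cong refl)
    fix i assume i: "i \<in> {1..k}"
    then have ii: "int (i - 1) = int i - 1" by auto
    have e: "b (i - 1) = hh' (\<xi> (int i - 1) \<omega>)" by (simp only: b_def ii)
    have "Dd (int i) \<omega> = hh (\<xi> (int i) \<omega>) - hh' (\<xi> (int i - 1) \<omega>)" using r(1) i by auto
    then show "Dd (int i) \<omega> = a i - b (i - 1)" unfolding e a_def .
  qed
  have eT: "Mtd k \<omega> = (\<Sum>i<k. a i - b (Suc i))"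
    unfolding Mtd_def
  proof (intro sum.cong refl)
    fix i assume i: "i \<in> {..<k}"
    have "Dtd (int i) \<omega> = hh (\<xi> (int i) \<omega>) - hh' (\<xi> (int i + 1) \<omega>)" using r(2) i by auto
    moreover have "b (Suc i) = hh' (\<xi> (int i + 1) \<omega>)" by (simp add: b_def add.commute)
    ultimately show "Dtd (int i) \<omega> = a i - b (Suc i)" unfolding a_def by simp
  qed
  have eR: "Rd k \<omega> = (\<Sum>i\<in>{1..k}. c (i - 1) + c i)"
    unfolding Rd_def sum_distrib_left
  proof (intro sum.cong refl)
    fix i assume i: "i \<in> {1..k}"
    then have ii: "int (i - 1) = int i - 1" by auto
    have e: "c (i - 1) = Gs n (\<xi> (int i - 1) \<omega>) / real n" by (simp only: c_def ii)
    have e1: "real_cond_exp M (F (int i - 1)) (\<lambda>\<omega>'. Smf (int n + int i - 1) \<omega>' - Smf (int i - 1) \<omega>') \<omega> = Gs n (\<xi> (int i - 1) \<omega>)"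
      using r(4) i by blast
    have e2: "real_cond_exp M (F (int i)) (\<lambda>\<omega>'. Smf (int n + int i) \<omega>' - Smf (int i) \<omega>') \<omega> = Gs n (\<xi> (int i) \<omega>)"
      using r(3) i by auto
    show "1 / real n * (real_cond_exp M (F (int i - 1)) (\<lambda>\<omega>'. Smf (int n + int i - 1) \<omega>' - Smf (int i - 1) \<omega>') \<omega>
        + real_cond_exp M (F (int i)) (\<lambda>\<omega>'. Smf (int n + int i) \<omega>' - Smf (int i) \<omega>') \<omega>) = c (i - 1) + c i"
      unfolding e1 e2 e by (simp add: c_def add_divide_distrib)
  qed
  have eS: "Smf (int k) \<omega> = (\<Sum>i\<in>{1..k}. u i)" unfolding Smf_def u_def by (rule sum_1_int_nat)
  have "f (\<xi> (int k) \<omega>) - f (\<xi> 0 \<omega>) = u k - u 0" by (simp add: u_def)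
  then show ?case using dec_alg[of a b u c k, OF abuc] unfolding eM eT eR eS by (simp add: field_simps)
qed

end

lemma Lpi_abs: "Lpi M p u \<Longrightarrow> Lpi M p (\<lambda>\<omega>. \<bar>u \<omega>\<bar>)" unfolding Lpi_def by auto
lemma Lp_norm_abs: "Lp_norm M p (\<lambda>\<omega>. \<bar>u \<omega>\<bar>) = Lp_norm M p u" by (simp add: Lp_norm_def)

context rmcf begin

lemma Rd_meas[measurable]: "Rd i \<in> borel_measurable M" unfolding Rd_def by measurable
lemma Smf_meas[measurable]: "Smf i \<in> borel_measurable M" unfolding Smf_def by measurable
lemma Mnd_meas[measurable]: "Mnd i \<in> borel_measurable M" unfolding Mnd_def Dd_def by measurable

definition "L p i = Lp_norm M p (real_cond_exp M (F 0) (Smf (int i)))"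

context
  fixes p :: real
  assumes p: "1 \<le> p" and fp: "integrable \<pi> (\<lambda>x. \<bar>f x\<bar> powr p)"
begin

lemma L_Gs: "Lp_norm M p (\<lambda>\<omega>. Gs i (\<xi> j \<omega>)) = L p i"
proof -
  have "L p i = Lp_norm M p (\<lambda>\<omega>. Gs i (\<xi> 0 \<omega>))"
    unfolding L_def by (rule Lp_norm_cong_AE) (use Sm_ce0[of i] in auto)
  then show ?thesis using Lp_xi[OF Gs_meas] by simp
qed

lemma LpGs: "Lpi M p (\<lambda>\<omega>. Gs i (\<xi> j \<omega>))" by (rule Lpi_Gs[OF p fp])

lemma part4a: "Lp_norm M p (\<lambda>\<omega>. Max ((\<lambda>i. \<bar>Rd i \<omega>\<bar>) ` {1..n})) \<le> 2 * L p n"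
proof -
  define V where "V \<omega> = (1 / real n) * (\<Sum>l\<in>{1..n}. \<bar>Gs n (\<xi> (int l - 1) \<omega>)\<bar> + \<bar>Gs n (\<xi> (int l) \<omega>)\<bar>)" for \<omega>
  have Vm[measurable]: "V \<in> borel_measurable M" unfolding V_def by measurable
  have LV: "Lpi M p V" unfolding V_def using p
    by (intro Lpi_cmult Lpi_sum Lpi_add Lpi_abs LpGs) auto
  have ne: "{1..n} \<noteq> {}" using n_pos by auto
  have AEb: "AE \<omega> in M. \<bar>Max ((\<lambda>i. \<bar>Rd i \<omega>\<bar>) ` {1..n})\<bar> \<le> \<bar>V \<omega>\<bar>"
    using rep_all[of n]
  proof eventually_elim
    case (elim \<omega>)
    have V0: "0 \<le> V \<omega>" unfolding V_def by (intro mult_nonneg_nonneg sum_nonneg) auto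
    have "\<bar>Rd i \<omega>\<bar> \<le> V \<omega>" if i: "i \<in> {1..n}" for i
    proof -
      have "Rd i \<omega> = (1 / real n) * (\<Sum>l\<in>{1..i}. Gs n (\<xi> (int l - 1) \<omega>) + Gs n (\<xi> (int l) \<omega>))"
        unfolding Rd_def
      proof (intro arg_cong[where f="\<lambda>x. 1 / real n * x"] sum.cong refl)
        fix l assume "l \<in> {1..i}"
        then have l: "l \<in> {1..n}" "l \<in> {..n}" using i by auto
        show "real_cond_exp M (F (int l - 1)) (\<lambda>\<omega>'. Smf (int n + int l - 1) \<omega>' - Smf (int l - 1) \<omega>') \<omega> +
          real_cond_exp M (F (int l)) (\<lambda>\<omega>'. Smf (int n + int l) \<omega>' - Smf (int l) \<omega>') \<omega> =
          Gs n (\<xi> (int l - 1) \<omega>) + Gs n (\<xi> (int l) \<omega>)"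
      proof -
        have c3: "\<forall>i\<in>{..n}. real_cond_exp M (F (int i)) (\<lambda>\<omega>'. Smf (int n + int i) \<omega>' - Smf (int i) \<omega>') \<omega> = Gs n (\<xi> (int i) \<omega>)"
          and c4: "\<forall>i\<in>{1..n}. real_cond_exp M (F (int i - 1)) (\<lambda>\<omega>'. Smf (int n + int i - 1) \<omega>' - Smf (int i - 1) \<omega>') \<omega> = Gs n (\<xi> (int i - 1) \<omega>)"
          using elim by blast+
        show ?thesis by (simp only: c3[rule_format, OF l(2)] c4[rule_format, OF l(1)])
      qed
      qed
      then have "\<bar>Rd i \<omega>\<bar> \<le> (1 / real n) * (\<Sum>l\<in>{1..i}. \<bar>Gs n (\<xi> (int l - 1) \<omega>)\<bar> + \<bar>Gs n (\<xi> (int l) \<omega>)\<bar>)"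
      proof -
        have "\<bar>\<Sum>l\<in>{1..i}. Gs n (\<xi> (int l - 1) \<omega>) + Gs n (\<xi> (int l) \<omega>)\<bar>
            \<le> (\<Sum>l\<in>{1..i}. \<bar>Gs n (\<xi> (int l - 1) \<omega>) + Gs n (\<xi> (int l) \<omega>)\<bar>)" by (rule sum_abs)
        also have "\<dots> \<le> (\<Sum>l\<in>{1..i}. \<bar>Gs n (\<xi> (int l - 1) \<omega>)\<bar> + \<bar>Gs n (\<xi> (int l) \<omega>)\<bar>)"
          by (intro sum_mono abs_triangle_ineq)
        finally have le: "\<bar>\<Sum>l\<in>{1..i}. Gs n (\<xi> (int l - 1) \<omega>) + Gs n (\<xi> (int l) \<omega>)\<bar>
            \<le> (\<Sum>l\<in>{1..i}. \<bar>Gs n (\<xi> (int l - 1) \<omega>)\<bar> + \<bar>Gs n (\<xi> (int l) \<omega>)\<bar>)" .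
        have a1: "\<bar>1 / real n\<bar> = 1 / real n" by simp
        have a2: "0 \<le> 1 / real n" by simp
        show ?thesis unfolding \<open>Rd i \<omega> = _\<close> abs_mult a1 by (rule mult_left_mono[OF le a2])
      qed
      also have "\<dots> \<le> V \<omega>" unfolding V_def using i
        by (intro mult_left_mono sum_mono2) auto
      finally show ?thesis .
    qed
    then have "Max ((\<lambda>i. \<bar>Rd i \<omega>\<bar>) ` {1..n}) \<le> V \<omega>" using ne by (intro Max.boundedI) auto
    moreover have "0 \<le> Max ((\<lambda>i. \<bar>Rd i \<omega>\<bar>) ` {1..n})"
    proof -
      have "\<bar>Rd 1 \<omega>\<bar> \<in> (\<lambda>i. \<bar>Rd i \<omega>\<bar>) ` {1..n}" using n_pos by auto
      then have "\<bar>Rd 1 \<omega>\<bar> \<le> Max ((\<lambda>i. \<bar>Rd i \<omega>\<bar>) ` {1..n})" by (intro Max_ge) auto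
      then show ?thesis by (rule order_trans[rotated]) simp
    qed
    ultimately show ?case using V0 by simp
  qed
  have Mm: "(\<lambda>\<omega>. Max ((\<lambda>i. \<bar>Rd i \<omega>\<bar>) ` {1..n})) \<in> borel_measurable M" by measurable
  have "Lp_norm M p (\<lambda>\<omega>. Max ((\<lambda>i. \<bar>Rd i \<omega>\<bar>) ` {1..n})) \<le> Lp_norm M p V"
    by (rule Lp_norm_mono[OF _ AEb Mm LV]) (use p in simp)
  also have "\<dots> = (1 / real n) * Lp_norm M p (\<lambda>\<omega>. \<Sum>l\<in>{1..n}. \<bar>Gs n (\<xi> (int l - 1) \<omega>)\<bar> + \<bar>Gs n (\<xi> (int l) \<omega>)\<bar>)"
    unfolding V_def using p by (subst Lp_norm_cmult) auto
  also have "\<dots> \<le> (1 / real n) * (\<Sum>l\<in>{1..n}. Lp_norm M p (\<lambda>\<omega>. \<bar>Gs n (\<xi> (int l - 1) \<omega>)\<bar> + \<bar>Gs n (\<xi> (int l) \<omega>)\<bar>))"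
    using p by (intro mult_left_mono Minkowski_sum[OF p] Lpi_add Lpi_abs LpGs) simp_all
  also have "\<dots> \<le> (1 / real n) * (\<Sum>l\<in>{1..n}. 2 * L p n)"
  proof (intro mult_left_mono sum_mono)
    fix l
    have "Lp_norm M p (\<lambda>\<omega>. \<bar>Gs n (\<xi> (int l - 1) \<omega>)\<bar> + \<bar>Gs n (\<xi> (int l) \<omega>)\<bar>)
        \<le> Lp_norm M p (\<lambda>\<omega>. \<bar>Gs n (\<xi> (int l - 1) \<omega>)\<bar>) + Lp_norm M p (\<lambda>\<omega>. \<bar>Gs n (\<xi> (int l) \<omega>)\<bar>)"
      by (intro Minkowski[OF p] Lpi_abs LpGs)
    then show "Lp_norm M p (\<lambda>\<omega>. \<bar>Gs n (\<xi> (int l - 1) \<omega>)\<bar> + \<bar>Gs n (\<xi> (int l) \<omega>)\<bar>) \<le> 2 * L p n"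
      by (simp add: Lp_norm_abs[of M p "\<lambda>\<omega>. Gs n (\<xi> _ \<omega>)"] L_Gs)
  qed simp
  also have "\<dots> = 2 * L p n" using n_pos by simp
  finally show ?thesis .
qed

end
end

lemma mn_alg:
  fixes a b u c :: "nat \<Rightarrow> real"
  assumes "\<And>i. a i = b i + u i - c i"
  shows "(\<Sum>i\<in>{1..k}. a i - b (i - 1)) = (\<Sum>i\<in>{1..k}. u i) - (\<Sum>i\<in>{1..k}. c i) + b k - b 0"
proof (induction k)
  case 0 then show ?case by simp
next
  case (Suc k)
  then show ?case using assms[of "Suc k"] by (simp add: algebra_simps)
qed

context rmcf begin

context
  fixes p :: real
  assumes p: "1 \<le> p" and fp: "integrable \<pi> (\<lambda>x. \<bar>f x\<bar> powr p)"
begin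

lemma part4b: "Lp_norm M p (Mnd n) \<le> Lp_norm M p (Smf (int n)) + 3 * Max (L p ` {1..n})"
proof -
  define Mx where "Mx = Max (L p ` {1..n})"
  have LMx: "i \<in> {1..n} \<Longrightarrow> L p i \<le> Mx" for i unfolding Mx_def by (intro Max_ge) auto
  define A2 where "A2 \<omega> = (- (1 / real n)) * (\<Sum>i\<in>{1..n}. Gs n (\<xi> (int i) \<omega>))" for \<omega>
  define A3 where "A3 \<omega> = hh' (\<xi> (int n) \<omega>)" for \<omega>
  define A4 where "A4 \<omega> = (- 1) * hh' (\<xi> 0 \<omega>)" for \<omega>
  have AEe: "AE \<omega> in M. Mnd n \<omega> = Smf (int n) \<omega> + A2 \<omega> + A3 \<omega> + A4 \<omega>"
    using rep_all[of n]
  proof eventually_elim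
    case (elim \<omega>)
    define a where "a i = hh (\<xi> (int i) \<omega>)" for i
    define b where "b i = hh' (\<xi> (int i) \<omega>)" for i
    define u where "u i = f (\<xi> (int i) \<omega>)" for i
    define c where "c i = Gs n (\<xi> (int i) \<omega>) / real n" for i
    have abuc: "a i = b i + u i - c i" for i unfolding a_def b_def u_def c_def by (rule hh_diff)
    have c1: "\<forall>i\<in>{..n}. Dd (int i) \<omega> = hh (\<xi> (int i) \<omega>) - hh' (\<xi> (int i - 1) \<omega>)" using elim by blast
    have eM: "Mnd n \<omega> = (\<Sum>i\<in>{1..n}. a i - b (i - 1))"
      unfolding Mnd_def
    proof (intro sum.cong refl)
      fix i assume i: "i \<in> {1..n}"
      then have ii: "int (i - 1) = int i - 1" by auto
      have e: "b (i - 1) = hh' (\<xi> (int i - 1) \<omega>)" by (simp only: b_def ii)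
      have "Dd (int i) \<omega> = hh (\<xi> (int i) \<omega>) - hh' (\<xi> (int i - 1) \<omega>)" using c1 i by auto
      then show "Dd (int i) \<omega> = a i - b (i - 1)" unfolding e a_def .
    qed
    have eS: "Smf (int n) \<omega> = (\<Sum>i\<in>{1..n}. u i)" unfolding Smf_def u_def by (rule sum_1_int_nat)
    have eC: "A2 \<omega> = - (\<Sum>i\<in>{1..n}. c i)" unfolding A2_def c_def by (simp add: sum_divide_distrib)
    show ?case unfolding eM mn_alg[of a b u c, OF abuc] eS eC A3_def A4_def by (simp add: b_def)
  qed
  have LS: "Lpi M p (Smf (int n))" unfolding Smf_def by (rule Lpi_Sm[OF p fp])
  have L2: "Lpi M p A2" unfolding A2_def using p by (intro Lpi_cmult Lpi_sum Lpi_Gs[OF p fp]) auto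
  have L3: "Lpi M p A3" unfolding A3_def by (rule Lpi_hh'[OF p fp])
  have L4: "Lpi M p A4" unfolding A4_def by (intro Lpi_cmult Lpi_hh'[OF p fp])
  have hh'_bound: "Lp_norm M p (\<lambda>\<omega>. hh' (\<xi> j \<omega>)) \<le> Mx" for j
  proof -
    have "Lp_norm M p (\<lambda>\<omega>. hh' (\<xi> j \<omega>)) = Lp_norm M p (\<lambda>\<omega>. (1 / real n) * (\<Sum>i<n. Gs (Suc i) (\<xi> j \<omega>)))"
      by (simp add: hh'_Gs)
    also have "\<dots> = (1 / real n) * Lp_norm M p (\<lambda>\<omega>. \<Sum>i<n. Gs (Suc i) (\<xi> j \<omega>))"
      using p by (subst Lp_norm_cmult) auto
    also have "\<dots> \<le> (1 / real n) * (\<Sum>i<n. Lp_norm M p (\<lambda>\<omega>. Gs (Suc i) (\<xi> j \<omega>)))"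
      by (intro mult_left_mono Minkowski_sum[OF p] Lpi_Gs[OF p fp]) simp
    also have "\<dots> \<le> (1 / real n) * (\<Sum>i<n. Mx)"
      by (intro mult_left_mono sum_mono) (auto simp: L_Gs[OF p fp] intro!: LMx)
    also have "\<dots> = Mx" using n_pos by simp
    finally show ?thesis .
  qed
  have "Lp_norm M p (Mnd n) = Lp_norm M p (\<lambda>\<omega>. Smf (int n) \<omega> + A2 \<omega> + A3 \<omega> + A4 \<omega>)"
    by (rule Lp_norm_cong_AE[OF AEe]) (use LS L2 L3 L4 in \<open>auto simp: Lpi_def\<close>)
  also have "\<dots> \<le> Lp_norm M p (\<lambda>\<omega>. Smf (int n) \<omega> + A2 \<omega> + A3 \<omega>) + Lp_norm M p A4"
    using p by (intro Minkowski[OF p] L4 Lpi_add LS L2 L3) auto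
  also have "\<dots> \<le> Lp_norm M p (\<lambda>\<omega>. Smf (int n) \<omega> + A2 \<omega>) + Lp_norm M p A3 + Lp_norm M p A4"
    using p by (intro add_right_mono Minkowski[OF p] L3 Lpi_add LS L2) auto
  also have "\<dots> \<le> Lp_norm M p (Smf (int n)) + Lp_norm M p A2 + Lp_norm M p A3 + Lp_norm M p A4"
    using p by (intro add_right_mono Minkowski[OF p] LS L2)
  also have "Lp_norm M p A2 \<le> Mx"
  proof -
    have "Lp_norm M p A2 = (1 / real n) * Lp_norm M p (\<lambda>\<omega>. \<Sum>i\<in>{1..n}. Gs n (\<xi> (int i) \<omega>))"
      unfolding A2_def using p by (subst Lp_norm_cmult) auto
    also have "\<dots> \<le> (1 / real n) * (\<Sum>i\<in>{1..n}. Lp_norm M p (\<lambda>\<omega>. Gs n (\<xi> (int i) \<omega>)))"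
      by (intro mult_left_mono Minkowski_sum[OF p] Lpi_Gs[OF p fp]) simp
    also have "\<dots> = L p n" using n_pos by (simp add: L_Gs[OF p fp])
    also have "\<dots> \<le> Mx" using n_pos by (intro LMx) auto
    finally show ?thesis .
  qed
  also have "Lp_norm M p A3 \<le> Mx" unfolding A3_def by (rule hh'_bound)
  also have "Lp_norm M p A4 \<le> Mx" unfolding A4_def using p hh'_bound[of 0] by (subst Lp_norm_cmult) auto
  finally show ?thesis unfolding Mx_def by simp
qed

end
end

theorem mainTheorem10:
  fixes M :: "'a measure" and S :: "'s measure" and \<pi> :: "'s measure"
    and Q :: "'s \<Rightarrow> 's measure" and \<xi> :: "int \<Rightarrow> 'a \<Rightarrow> 's"
    and f :: "'s \<Rightarrow> real" and n :: nat
    and X :: "int \<Rightarrow> 'a \<Rightarrow> real" and Sm :: "int \<Rightarrow> 'a \<Rightarrow> real"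
    and \<F> \<G> :: "int \<Rightarrow> 'a measure" and E :: "int \<Rightarrow> ('a \<Rightarrow> real) \<Rightarrow> 'a \<Rightarrow> real"
    and \<theta> D Dt :: "int \<Rightarrow> 'a \<Rightarrow> real" and Mn Mt R :: "nat \<Rightarrow> 'a \<Rightarrow> real"
  assumes chain: "stationary_reversible_markov M S \<pi> Q \<xi>"
    and f_meas: "f \<in> borel_measurable S"
    and f_L2: "integrable \<pi> (\<lambda>x. (f x)\<^sup>2)"
    and f_centered: "(\<integral>x. f x \<partial>\<pi>) = 0"
    and n_pos: "n \<ge> 1"
    and X_def: "\<And>k. X k = (\<lambda>\<omega>. f (\<xi> k \<omega>))"
    and S_def: "\<And>k. Sm k = (\<lambda>\<omega>. \<Sum>i\<in>{1..k}. X i \<omega>)"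
    and F_def: "\<And>k. \<F> k = past_alg M S \<xi> k"
    and G_def: "\<And>k. \<G> k = future_alg M S \<xi> k"
    and E_def: "\<And>k Y. E k Y = real_cond_exp M (\<F> k) Y"
    and theta_def: "\<And>k. \<theta> k = (\<lambda>\<omega>. (1 / real n) *
                      (\<Sum>i<n. E k (\<lambda>\<omega>'. \<Sum>j\<in>{k..k + int i}. X j \<omega>') \<omega>))"
    and D_def: "\<And>k. D k = (\<lambda>\<omega>. \<theta> k \<omega> - E (k - 1) (\<theta> k) \<omega>)"
    and Dt_def: "\<And>k. Dt k = (\<lambda>\<omega>. \<theta> k \<omega> - real_cond_exp M (\<G> (k + 1)) (\<theta> k) \<omega>)"
    and M_def: "\<And>k. Mn k = (\<lambda>\<omega>. \<Sum>i\<in>{1..k}. D (int i) \<omega>)"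
    and Mt_def: "\<And>k. Mt k = (\<lambda>\<omega>. \<Sum>i<k. Dt (int i) \<omega>)"
    and R_def: "\<And>k. R k = (\<lambda>\<omega>. (1 / real n) * (\<Sum>i\<in>{1..k}.
                   E (int i - 1) (\<lambda>\<omega>'. Sm (int n + int i - 1) \<omega>' - Sm (int i - 1) \<omega>') \<omega>
                 + E (int i) (\<lambda>\<omega>'. Sm (int n + int i) \<omega>' - Sm (int i) \<omega>') \<omega>))"
  shows
    "(\<forall>k. D k \<in> borel_measurable (\<F> k) \<and> integrable M (D k) \<and>
          (AE \<omega> in M. E (k - 1) (D k) \<omega> = 0))
     \<and> (\<forall>k. (\<exists>g\<in>borel_measurable (\<G> k). AE \<omega> in M. Dt k \<omega> = g \<omega>) \<and> integrable M (Dt k) \<and>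
          (AE \<omega> in M. real_cond_exp M (\<G> (k + 1)) (Dt k) \<omega> = 0))
     \<and> (\<forall>k::nat. k \<ge> 1 \<longrightarrow> (AE \<omega> in M.
          Sm (int k) \<omega> = (1 / 2) * ((X (int k) \<omega> - X 0 \<omega>) + Mn k \<omega> + Mt k \<omega> + R k \<omega>)))
     \<and> (\<forall>p::real. p \<ge> 1 \<longrightarrow> integrable \<pi> (\<lambda>x. \<bar>f x\<bar> powr p) \<longrightarrow>
          Lp_norm M p (\<lambda>\<omega>. Max ((\<lambda>i. \<bar>R i \<omega>\<bar>) ` {1..n})) \<le> 2 * Lp_norm M p (E 0 (Sm (int n)))
        \<and> Lp_norm M p (Mn n) \<le> Lp_norm M p (Sm (int n))
              + 3 * Max ((\<lambda>i. Lp_norm M p (E 0 (Sm (int i)))) ` {1..n}))"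
proof -
  interpret rmc M S \<pi> Q \<xi> by unfold_locales (rule chain)
  have spi: "sets \<pi> = sets S" using distr_xi[of 0] sets_distr[of M S "\<xi> 0"] by simp
  have fmp: "f \<in> borel_measurable \<pi>" using f_meas spi by (simp cong: measurable_cong_sets)
  have fint: "integrable \<pi> f"
    using finite_measure.square_integrable_imp_integrable[OF prob_space.finite_measure[OF pi_prob] fmp] f_L2
    by simp
  interpret RF: rmcf M S \<pi> Q \<xi> f n by unfold_locales (use f_meas fint n_pos in auto)
  have Fe: "\<F> = (\<lambda>k. past_alg M S \<xi> k)" using F_def by auto
  have Ge: "\<G> = (\<lambda>k. future_alg M S \<xi> k)" using G_def by auto
  have Ee: "E = (\<lambda>k Y. real_cond_exp M (past_alg M S \<xi> k) Y)" using E_def F_def by (auto intro!: ext)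
  have Xe: "X = (\<lambda>k \<omega>. f (\<xi> k \<omega>))" using X_def by auto
  have Sme: "Sm = RF.Smf" using S_def X_def by (auto intro!: ext simp: RF.Smf_def)
  have the: "\<theta> = RF.th" using theta_def by (auto intro!: ext simp: RF.th_def Ee Xe)
  have De: "D = RF.Dd" using D_def by (auto intro!: ext simp: RF.Dd_def the Ee)
  have Dte: "Dt = RF.Dtd" using Dt_def by (auto intro!: ext simp: RF.Dtd_def the Ge)
  have Mne: "Mn = RF.Mnd" using M_def by (auto intro!: ext simp: RF.Mnd_def De)
  have Mte: "Mt = RF.Mtd" using Mt_def by (auto intro!: ext simp: RF.Mtd_def Dte)
  have Re: "R = RF.Rd" using R_def by (auto intro!: ext simp: RF.Rd_def Ee Sme)
  show ?thesis
    unfolding Fe Ge Ee Xe Sme De Dte Mne Mte Re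
    apply (intro conjI allI impI)
    subgoal by (rule RF.part1[THEN conjunct1])
    subgoal by (rule RF.part1[THEN conjunct2, THEN conjunct1])
    subgoal by (rule RF.part1[THEN conjunct2, THEN conjunct2])
    subgoal by (rule RF.part2[THEN conjunct1])
    subgoal by (rule RF.part2[THEN conjunct2, THEN conjunct1])
    subgoal by (rule RF.part2[THEN conjunct2, THEN conjunct2])
    subgoal by (rule RF.part3)
    subgoal premises prems for p using RF.part4a[OF prems] unfolding RF.L_def .
    subgoal premises prems for p using RF.part4b[OF prems] unfolding RF.L_def[abs_def] .
    done
qed

end
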